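(* Under Assumption 1 (as described in the context), $v_{\mathrm P}\le v_{\mathrm D}$.
   Context: Let $\mathcal X\subseteq\mathbb R^{d_x}$ be compact, $\mathcal Y\subseteq\mathbb R^{d_y}$, $\mathcal Z\subseteq\mathbb R^{d_z}$. Fix a loss $\Psi:\mathcal Z\times\mathcal Y\to\mathbb R\cup\{\infty\}$ and a decision rule $f:\mathcal X\to\mathcal Z$. Let $\widehat{\mathbb P}$ be an empirical (finitely supported) distribution on $\mathcal X\times\mathcal Y$ with first marginal $\widehat{\mathbb P}_{\widehat{\boldsymbol X}}$ and conditionals $\widehat{\mathbb P}_{\widehat{\boldsymbol Y}\mid\widehat{\boldsymbol X}=\widehat{\boldsymbol x}}$. Fix $p\in[1,\infty)$, $\rho\ge0$, $\epsilon>0$, and reference measures $\nu_{\mathcal X}$ on $\mathcal X$, $\nu_{\mathcal Y}$ on $\mathcal Y$. Cost: $c_p((\widehat{\boldsymbol x},\widehat{\boldsymbol y}),(\boldsymbol x,\boldsymbol y))=\|\boldsymbol x-\widehat{\boldsymbol x}\|^p+\|\boldsymbol y-\widehat{\boldsymbol y}\|^p$. A coupling $\gamma$ of $\mathbb P,\mathbb Q\in\mathcal P(\mathcal X\times\mathcal Y)$ is causal if for $((\widehat{\boldsymbol X},\widehat{\boldsymbol Y}),(\boldsymbol X,\boldsymbol Y))\sim\gamma$, $\boldsymbol X$ is conditionally independent of $\widehat{\boldsymbol Y}$ given $\widehat{\boldsymbol X}$; $\Gamma_c(\mathbb P,\mathbb Q)$ is the set of causal couplings. Causal Sinkhorn discrepancy: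 $R_p(\mathbb P,\mathbb Q)^p=\inf_{\gamma\in\Gamma_c(\mathbb P,\mathbb Q)}\{\mathbb E_\gamma[c_p]+\epsilon H(\gamma\mid\mathbb P\otimes\nu_{\mathcal X}\otimes\nu_{\mathcal Y})\}$, with $H$ the relative entropy. Primal: $v_{\mathrm P}=\sup\{\mathbb E_{\mathbb P}[\Psi(f(\boldsymbol x),\boldsymbol y)]:\ \mathbb P\in\mathcal P(\mathcal X\times\mathcal Y),\ R_p(\widehat{\mathbb P},\mathbb P)^p\le\rho^p\}$. Dual: $v_{\mathrm D}=\inf_{\lambda\ge0}\{\lambda\rho^p+\mathbb E_{\widehat{\boldsymbol x}\sim\widehat{\mathbb P}_{\widehat{\boldsymbol X}}}[\lambda\epsilon\log\int_{\mathcal X}\exp(g(\widehat{\boldsymbol x},\boldsymbol x,\lambda)/(\lambda\epsilon))\mathrm d\nu_{\mathcal X}(\boldsymbol x)]\}$ with $g(\widehat{\boldsymbol x},\boldsymbol x,\lambda)=\mathbb E_{\widehat{\boldsymbol y}\sim\widehat{\mathbb P}_{\widehat{\boldsymbol Y}\mid\widehat{\boldsymbol X}=\widehat{\boldsymbol x}}}[\lambda\epsilon\log\int_{\mathcal Y}\exp((\Psi(f(\boldsymbol x),\boldsymbol y)-\lambda c_p((\widehat{\boldsymbol x},\widehat{\boldsymbol y}),(\boldsymbol x,\boldsymbol y)))/(\lambda\epsilon))\mathrm d\nu_{\mathcal Y}(\boldsymbol y)]$. Assumption 1: (i) $\mathcal X,\mathcal Z$ measurable sets and $\Psi$, $f$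 measurable; (ii) every joint distribution $\gamma$ on $(\mathcal X\times\mathcal Y)^2$ with first marginal $\widehat{\mathbb P}$ has a regular conditional distribution given its first marginal; (iii) $c_p$ measurable with $0\le c_p<\infty$ for $\widehat{\mathbb P}\otimes\nu_{\mathcal X}\otimes\nu_{\mathcal Y}$-a.e. point; (iv) for every $\delta>0$, $\int_{\mathbb R^{d_x}}e^{-\delta\|\boldsymbol u\|^p}\mathrm d\nu_{\mathcal X}(\boldsymbol u)<\infty$ and $\int_{\mathbb R^{d_y}}e^{-\delta\|\boldsymbol u\|^p}\mathrm d\nu_{\mathcal Y}(\boldsymbol u)<\infty$. *)

theory Defs
  imports "HOL-Probability.Probability"
begin

definition eexp :: "ereal \<Rightarrow> ennreal" where
  "eexp t = (if t = \<infinity> then \<infinity> else if t = -\<infinity> then 0 else ennreal (exp (real_of_ereal t)))"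

definition eln :: "ennreal \<Rightarrow> ereal" where
  "eln u = (if u = 0 then -\<infinity> else if u = \<infinity> then \<infinity> else ereal (ln (enn2real u)))"

definition pos_int :: "'x measure \<Rightarrow> ('x \<Rightarrow> ereal) \<Rightarrow> ennreal" where
  "pos_int M g = (\<integral>\<^sup>+ z. e2ennreal (g z) \<partial>M)"

definition neg_int :: "'x measure \<Rightarrow> ('x \<Rightarrow> ereal) \<Rightarrow> ennreal" where
  "neg_int M g = (\<integral>\<^sup>+ z. e2ennreal (- g z) \<partial>M)"

definition expect_defined :: "'x measure \<Rightarrow> ('x \<Rightarrow> ereal) \<Rightarrow> bool" where
  "expect_defined M g \<longleftrightarrow> \<not> (pos_int M g = \<infinity> \<and> neg_int M g = \<infinity>)"

definition eexpect :: "'x measure \<Rightarrow> ('x \<Rightarrow> ereal) \<Rightarrow> ereal" where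
  "eexpect M g = enn2ereal (pos_int M g) - enn2ereal (neg_int M g)"

text \<open>When both the positive and the negative part of the integral are infinite,
  Isabelle's convention \<open>\<infinity> - \<infinity> = \<infinity>\<close> applies.\<close>
definition rel_entropy :: "'x measure \<Rightarrow> 'x measure \<Rightarrow> ereal" where
  "rel_entropy \<gamma> \<mu> =
     (if sets \<gamma> = sets \<mu> \<and> absolutely_continuous \<mu> \<gamma>
      then eexpect \<gamma> (\<lambda>z. ereal (ln (enn2real (RN_deriv \<mu> \<gamma> z))))
      else \<infinity>)"

definition cost_p :: "real \<Rightarrow> ('a::real_normed_vector \<times> 'b::real_normed_vector) \<Rightarrow> ('a \<times> 'b) \<Rightarrow> real" where
  "cost_p p w v = norm (fst v - fst w) powr p + norm (snd v - snd w) powr p"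

definition emp_measure :: "('a::topological_space \<times> 'b::topological_space) pmf \<Rightarrow> ('a \<times> 'b) measure" where
  "emp_measure Ph = distr (measure_pmf Ph) borel (\<lambda>z. z)"

definition ref_measure :: "('a \<times> 'b) measure \<Rightarrow> 'a measure \<Rightarrow> 'b measure \<Rightarrow> (('a \<times> 'b) \<times> ('a \<times> 'b)) measure" where
  "ref_measure P nuX nuY = P \<Otimes>\<^sub>M (nuX \<Otimes>\<^sub>M nuY)"

definition is_coupling :: "(('a::topological_space \<times> 'b::topological_space) \<times> ('a \<times> 'b)) measure \<Rightarrow> ('a \<times> 'b) measure \<Rightarrow> ('a \<times> 'b) measure \<Rightarrow> bool" where
  "is_coupling \<gamma> P Q \<longleftrightarrow> prob_space \<gamma> \<and> distr \<gamma> borel fst = P \<and> distr \<gamma> borel snd = Q"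

text \<open>Causality: for \<open>((X',Y'),(X,Y)) \<sim> \<gamma>\<close>, \<open>X\<close> is conditionally independent of \<open>Y'\<close>
  given \<open>X'\<close>.  Since the first marginal is finitely supported, \<open>X'\<close> is a discrete
  random variable and conditional independence is the elementary one.\<close>
definition is_causal :: "(('a::topological_space \<times> 'b::topological_space) \<times> ('a \<times> 'b)) measure \<Rightarrow> bool" where
  "is_causal \<gamma> \<longleftrightarrow>
     (\<forall>xh. \<forall>A \<in> sets (borel :: 'a measure). \<forall>B \<in> sets (borel :: 'b measure).
        measure \<gamma> {w \<in> space \<gamma>. fst (snd w) \<in> A \<and> snd (fst w) \<in> B \<and> fst (fst w) = xh}
          * measure \<gamma> {w \<in> space \<gamma>. fst (fst w) = xh}
        = measure \<gamma> {w \<in> space \<gamma>. fst (snd w) \<in> A \<and> fst (fst w) = xh}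
          * measure \<gamma> {w \<in> space \<gamma>. snd (fst w) \<in> B \<and> fst (fst w) = xh})"

definition causal_sinkhorn_p ::
  "real \<Rightarrow> real \<Rightarrow> 'a::euclidean_space measure \<Rightarrow> 'b::euclidean_space measure \<Rightarrow>
   ('a \<times> 'b) measure \<Rightarrow> ('a \<times> 'b) measure \<Rightarrow> ereal" where
  "causal_sinkhorn_p p \<epsilon> nuX nuY P Q =
     (INF \<gamma> \<in> {\<gamma>. sets \<gamma> = sets (ref_measure P nuX nuY) \<and> is_coupling \<gamma> P Q \<and> is_causal \<gamma>}.
        enn2ereal (\<integral>\<^sup>+ w. ennreal (cost_p p (fst w) (snd w)) \<partial>\<gamma>)
        + ereal \<epsilon> * rel_entropy \<gamma> (ref_measure P nuX nuY))"

definition primal_value ::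
  "real \<Rightarrow> real \<Rightarrow> real \<Rightarrow> 'a::euclidean_space set \<Rightarrow> 'b::euclidean_space set \<Rightarrow>
   'a measure \<Rightarrow> 'b measure \<Rightarrow> ('c \<times> 'b \<Rightarrow> ereal) \<Rightarrow> ('a \<Rightarrow> 'c) \<Rightarrow> ('a \<times> 'b) pmf \<Rightarrow> ereal" where
  "primal_value p \<epsilon> \<rho> X Y nuX nuY \<Psi> f Ph =
     (SUP P \<in> {P. prob_space P \<and> sets P = sets (borel :: ('a \<times> 'b) measure)
                 \<and> (AE z in P. z \<in> X \<times> Y)
                 \<and> expect_defined P (\<lambda>z. \<Psi> (f (fst z), snd z))
                 \<and> causal_sinkhorn_p p \<epsilon> nuX nuY (emp_measure Ph) P \<le> ereal (\<rho> powr p)}.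
        eexpect P (\<lambda>z. \<Psi> (f (fst z), snd z)))"

text \<open>The function \<open>g(x', x, \<lambda>)\<close>; the expectation over the (finitely supported)
  conditional empirical distribution of \<open>Y'\<close> given \<open>X' = x'\<close> is written as a finite sum.\<close>
definition g_fun ::
  "real \<Rightarrow> real \<Rightarrow> 'b::euclidean_space measure \<Rightarrow> ('c \<times> 'b \<Rightarrow> ereal) \<Rightarrow> ('a::euclidean_space \<Rightarrow> 'c)
   \<Rightarrow> ('a \<times> 'b) pmf \<Rightarrow> 'a \<Rightarrow> 'a \<Rightarrow> real \<Rightarrow> ereal" where
  "g_fun p \<epsilon> nuY \<Psi> f Ph xh x lam =
     (\<Sum>z \<in> {z \<in> set_pmf Ph. fst z = xh}.
        ereal (pmf Ph z / pmf (map_pmf fst Ph) xh) *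
        (ereal (lam * \<epsilon>) *
         eln (\<integral>\<^sup>+ y. eexp ((\<Psi> (f x, y) - ereal (lam * cost_p p z (x, y))) * ereal (1 / (lam * \<epsilon>))) \<partial>nuY)))"

definition dual_obj ::
  "real \<Rightarrow> real \<Rightarrow> real \<Rightarrow> 'a::euclidean_space measure \<Rightarrow> 'b::euclidean_space measure \<Rightarrow>
   ('c \<times> 'b \<Rightarrow> ereal) \<Rightarrow> ('a \<Rightarrow> 'c) \<Rightarrow> ('a \<times> 'b) pmf \<Rightarrow> real \<Rightarrow> ereal" where
  "dual_obj p \<epsilon> \<rho> nuX nuY \<Psi> f Ph lam =
     ereal (lam * \<rho> powr p) +
     (\<Sum>xh \<in> set_pmf (map_pmf fst Ph).
        ereal (pmf (map_pmf fst Ph) xh) *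
        (ereal (lam * \<epsilon>) *
         eln (\<integral>\<^sup>+ x. eexp (g_fun p \<epsilon> nuY \<Psi> f Ph xh x lam * ereal (1 / (lam * \<epsilon>))) \<partial>nuX)))"

text \<open>The infimum is over \<open>\<lambda> > 0\<close>; the value at \<open>\<lambda> = 0\<close> is understood
  as the limit \<open>\<lambda> \<rightarrow> 0+\<close>, which does not change the infimum.\<close>
definition dual_value ::
  "real \<Rightarrow> real \<Rightarrow> real \<Rightarrow> 'a::euclidean_space measure \<Rightarrow> 'b::euclidean_space measure \<Rightarrow>
   ('c \<times> 'b \<Rightarrow> ereal) \<Rightarrow> ('a \<Rightarrow> 'c) \<Rightarrow> ('a \<times> 'b) pmf \<Rightarrow> ereal" where
  "dual_value p \<epsilon> \<rho> nuX nuY \<Psi> f Ph = (INF lam \<in> {0<..}. dual_obj p \<epsilon> \<rho> nuX nuY \<Psi> f Ph lam)"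

end

theory Submission
  imports Defs
begin

lemma meas_comp2:
  assumes "(\<lambda>t. F (fst t) (snd t)) \<in> borel_measurable (A \<Otimes>\<^sub>M B)" "g \<in> measurable M A" "h \<in> measurable M B"
  shows "(\<lambda>x. F (g x) (h x)) \<in> borel_measurable M"
  using measurable_compose[OF measurable_Pair[OF assms(2,3)] assms(1)] by simp

locale wd =
  fixes Ph :: "('a::euclidean_space \<times> 'b::euclidean_space) pmf"
    and nuX :: "'a measure" and nuY :: "'b measure"
    and p lam eps nb :: real and psi :: "'a \<times> 'b \<Rightarrow> real"
  assumes finS: "finite (set_pmf Ph)"
    and p1: "p \<ge> 1" and lam: "lam > 0" and eps: "eps > 0"
    and setsX: "sets nuX = sets borel" and setsY: "sets nuY = sets borel"
    and finX: "emeasure nuX (space nuX) < \<infinity>"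
    and intY: "\<And>\<delta>. \<delta> > 0 \<Longrightarrow> (\<integral>\<^sup>+ u. ennreal (exp (- \<delta> * norm u powr p)) \<partial>nuY) < \<infinity>"
    and psi_meas: "psi \<in> borel_measurable (borel \<Otimes>\<^sub>M borel)"
    and psi_le: "\<And>v. psi v \<le> nb"
begin

abbreviation "aa \<equiv> lam * eps"

lemma aa_pos: "aa > 0" using lam eps by simp

lemma cost_meas[measurable]: "(\<lambda>w::('a\<times>'b)\<times>('a\<times>'b). cost_p p (fst w) (snd w)) \<in> borel_measurable ((borel \<Otimes>\<^sub>M borel) \<Otimes>\<^sub>M (borel \<Otimes>\<^sub>M borel))"
  unfolding cost_p_def by measurable

lemma space_Y[simp]: "space nuY = UNIV" using sets_eq_imp_space_eq[OF setsY] by simp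
lemma space_X[simp]: "space nuX = UNIV" using sets_eq_imp_space_eq[OF setsX] by simp

lemma measurable_Y_cong: "measurable nuY = measurable borel"
  by (intro ext measurable_cong_sets setsY refl)

lemma sf_Y: "sigma_finite_measure nuY"
proof -
  define h where "h u = exp (- 1 * norm u powr p)" for u :: 'b
  have hint: "(\<integral>\<^sup>+ u. ennreal (h u) \<partial>nuY) < \<infinity>" unfolding h_def using intY[of 1] by simp
  define A where "A k = {u. h u \<ge> 1 / Suc k}" for k :: nat
  have hm[measurable]: "h \<in> borel_measurable borel" unfolding h_def by measurable
  have hm2: "(\<lambda>u. ennreal (h u)) \<in> borel_measurable borel" by simp
  have Asets: "A k \<in> sets nuY" for k unfolding A_def setsY using hm by measurable
  have Afin: "emeasure nuY (A k) \<noteq> \<infinity>" for k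
  proof -
    have "emeasure nuY (A k) = (\<integral>\<^sup>+ u. indicator (A k) u \<partial>nuY)" using Asets by simp
    also have "\<dots> \<le> (\<integral>\<^sup>+ u. ennreal (Suc k) * ennreal (h u) \<partial>nuY)"
    proof (intro nn_integral_mono)
      fix u show "indicator (A k) u \<le> ennreal (Suc k) * ennreal (h u)"
      proof (cases "u \<in> A k")
        case True
        then have "1 \<le> real (Suc k) * h u" unfolding A_def by (simp add: field_simps)
        then have "ennreal 1 \<le> ennreal (real (Suc k) * h u)" by (rule ennreal_leI)
        also have "\<dots> = ennreal (Suc k) * ennreal (h u)" by (rule ennreal_mult) (auto simp: h_def)
        finally show ?thesis using True by simp
      qed simp
    qed
    also have "\<dots> = ennreal (Suc k) * (\<integral>\<^sup>+ u. ennreal (h u) \<partial>nuY)"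
      by (rule nn_integral_cmult) (simp add: measurable_Y_cong)
    also have "\<dots> < \<infinity>" using hint by (simp add: ennreal_mult_less_top)
    finally show ?thesis by simp
  qed
  have cov: "(\<Union>k. A k) = UNIV"
  proof -
    have "\<exists>k. u \<in> A k" for u
    proof -
      have hp: "h u > 0" unfolding h_def by simp
      obtain k :: nat where "1 / h u \<le> k" using real_arch_simple by blast
      then have "1 / h u \<le> real (Suc k)" by simp
      then have "1 \<le> real (Suc k) * h u" using hp by (simp add: field_simps)
      then have "1 / Suc k \<le> h u" by (simp add: field_simps)
      then show ?thesis unfolding A_def by auto
    qed
    then show ?thesis by auto
  qed
  show ?thesis
    unfolding sigma_finite_measure_def
    using Afin by (intro exI[of _ "range A"]) (auto simp: Asets cov[symmetric] infinity_ennreal_def)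
qed

lemma sf_X: "sigma_finite_measure nuX" and fm_X: "finite_measure nuX"
proof -
  show fm: "finite_measure nuX" using finX by (intro finite_measureI) simp
  then show "sigma_finite_measure nuX" by (rule finite_measure.sigma_finite_measure)
qed

lemma measurable_X_cong: "measurable nuX = measurable borel"
  by (intro ext measurable_cong_sets setsX refl)

lemma norm_powr_tri: "norm (y::'c::real_normed_vector) powr p \<le> 2 powr p * (norm (y - yh) powr p + norm yh powr p)"
proof -
  define m where "m = max (norm (y - yh)) (norm yh)"
  have "norm y \<le> norm (y - yh) + norm yh" by (metis norm_triangle_ineq diff_add_cancel)
  also have "\<dots> \<le> 2 * m" unfolding m_def by simp
  finally have "norm y powr p \<le> (2 * m) powr p" using p1 by (intro powr_mono2) auto
  also have "\<dots> = 2 powr p * m powr p" unfolding m_def by (simp add: powr_mult)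
  also have "m powr p \<le> norm (y - yh) powr p + norm yh powr p" unfolding m_def max_def by auto
  finally show ?thesis by simp
qed

lemma CY_fin:
  assumes d: "\<delta> > 0"
  shows "(\<integral>\<^sup>+ y. ennreal (exp (- \<delta> * norm (y - yh) powr p)) \<partial>nuY) < \<infinity>"
proof -
  define d' where "d' = \<delta> / 2 powr p"
  have d'pos: "d' > 0" using d unfolding d'_def by simp
  have "(\<integral>\<^sup>+ y. ennreal (exp (- \<delta> * norm (y - yh) powr p)) \<partial>nuY)
      \<le> (\<integral>\<^sup>+ y. ennreal (exp (\<delta> * norm yh powr p)) * ennreal (exp (- d' * norm y powr p)) \<partial>nuY)"
  proof (intro nn_integral_mono)
    fix y :: 'b
    have "norm y powr p \<le> 2 powr p * (norm (y - yh) powr p + norm yh powr p)" by (rule norm_powr_tri)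
    then have "d' * norm y powr p \<le> d' * (2 powr p * (norm (y - yh) powr p + norm yh powr p))"
      using d'pos by (intro mult_left_mono) auto
    also have "\<dots> = \<delta> * (norm (y - yh) powr p + norm yh powr p)" unfolding d'_def by simp
    finally have "d' * norm y powr p \<le> \<delta> * (norm (y - yh) powr p + norm yh powr p)" .
    then have "- \<delta> * norm (y - yh) powr p \<le> \<delta> * norm yh powr p + (- d' * norm y powr p)"
      by (simp add: algebra_simps)
    then have "exp (- \<delta> * norm (y - yh) powr p) \<le> exp (\<delta> * norm yh powr p) * exp (- d' * norm y powr p)"
      by (simp add: exp_add[symmetric])
    then show "ennreal (exp (- \<delta> * norm (y - yh) powr p)) \<le> ennreal (exp (\<delta> * norm yh powr p)) * ennreal (exp (- d' * norm y powr p))"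
      by (simp add: ennreal_mult[symmetric] ennreal_leI)
  qed
  also have "\<dots> = ennreal (exp (\<delta> * norm yh powr p)) * (\<integral>\<^sup>+ y. ennreal (exp (- d' * norm y powr p)) \<partial>nuY)"
    by (rule nn_integral_cmult) (simp add: measurable_Y_cong)
  also have "\<dots> < \<infinity>" using intY[OF d'pos] by (simp add: ennreal_mult_less_top)
  finally show ?thesis .
qed

definition "ZY z x = (\<integral>\<^sup>+ y. ennreal (exp ((psi (x, y) - lam * cost_p p z (x, y)) / aa)) \<partial>nuY)"

lemma ZY_le: "ZY z x \<le> ennreal (exp (nb / aa)) * (\<integral>\<^sup>+ y. ennreal (exp (- (1/eps) * norm (y - snd z) powr p)) \<partial>nuY)"
proof -
  have "ZY z x \<le> (\<integral>\<^sup>+ y. ennreal (exp (nb / aa)) * ennreal (exp (- (1/eps) * norm (y - snd z) powr p)) \<partial>nuY)"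
    unfolding ZY_def
  proof (intro nn_integral_mono)
    fix y :: 'b
    have c: "cost_p p z (x, y) \<ge> norm (y - snd z) powr p" unfolding cost_p_def by simp
    have "lam * norm (y - snd z) powr p \<le> lam * cost_p p z (x, y)" using c lam by (intro mult_left_mono) auto
    then have "(psi (x, y) - lam * cost_p p z (x, y)) \<le> (nb - lam * norm (y - snd z) powr p)"
      using psi_le[of "(x,y)"] by linarith
    then have "(psi (x, y) - lam * cost_p p z (x, y)) / aa \<le> (nb - lam * norm (y - snd z) powr p) / aa"
      using aa_pos by (intro divide_right_mono) auto
    also have "\<dots> = nb / aa + (- (1/eps) * norm (y - snd z) powr p)"
      using lam eps by (simp add: field_simps)
    finally have "exp ((psi (x, y) - lam * cost_p p z (x, y)) / aa) \<le> exp (nb / aa) * exp (- (1/eps) * norm (y - snd z) powr p)"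
      by (simp add: exp_add[symmetric])
    then show "ennreal (exp ((psi (x, y) - lam * cost_p p z (x, y)) / aa)) \<le> ennreal (exp (nb / aa)) * ennreal (exp (- (1/eps) * norm (y - snd z) powr p))"
      by (simp add: ennreal_mult[symmetric] ennreal_leI)
  qed
  also have "\<dots> = ennreal (exp (nb / aa)) * (\<integral>\<^sup>+ y. ennreal (exp (- (1/eps) * norm (y - snd z) powr p)) \<partial>nuY)"
    by (rule nn_integral_cmult) (simp add: measurable_Y_cong)
  finally show ?thesis .
qed

lemma ZY_fin: "ZY z x < \<infinity>"
  using ZY_le[of z x] CY_fin[of "1/eps" "snd z"] eps
  by (simp add: ennreal_mult_less_top) (meson ennreal_mult_less_top ennreal_less_top order.strict_trans1)

lemma ZY_meas: "(\<lambda>zx. ZY (fst zx) (snd zx)) \<in> borel_measurable ((borel \<Otimes>\<^sub>M borel) \<Otimes>\<^sub>M borel)"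
proof -
  have s: "sets (((borel \<Otimes>\<^sub>M borel) \<Otimes>\<^sub>M borel) \<Otimes>\<^sub>M nuY) = sets (((borel \<Otimes>\<^sub>M borel) \<Otimes>\<^sub>M borel) \<Otimes>\<^sub>M (borel :: 'b measure))"
    by (intro sets_pair_measure_cong refl setsY)
  have "(\<lambda>(zx, y). ennreal (exp ((psi (snd zx, y) - lam * cost_p p (fst zx) (snd zx, y)) / aa)))
     \<in> borel_measurable (((borel \<Otimes>\<^sub>M borel) \<Otimes>\<^sub>M borel) \<Otimes>\<^sub>M nuY)"
    unfolding measurable_cong_sets[OF s refl] cost_p_def using psi_meas by measurable
  from sigma_finite_measure.borel_measurable_nn_integral[OF sf_Y this]
  show ?thesis unfolding ZY_def by (simp add: case_prod_beta)
qed

definition "LL z x = ln (enn2real (ZY z x))"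
definition "LM T z x = max (LL z x) (- T)"
definition "wt z = pmf Ph z / pmf (map_pmf fst Ph) (fst z)"
definition "GM T xh x = (\<Sum>z\<in>set_pmf Ph. if fst z = xh then wt z * LM T z x else 0)"
definition "ZX T xh = (\<integral>\<^sup>+ x. ennreal (exp (GM T xh x)) \<partial>nuX)"
definition "KM T xh = ln (enn2real (ZX T xh))"

lemma LL_meas: "(\<lambda>zx. LL (fst zx) (snd zx)) \<in> borel_measurable ((borel \<Otimes>\<^sub>M borel) \<Otimes>\<^sub>M borel)"
  unfolding LL_def using ZY_meas by measurable

lemma LM_meas: "(\<lambda>zx. LM T (fst zx) (snd zx)) \<in> borel_measurable ((borel \<Otimes>\<^sub>M borel) \<Otimes>\<^sub>M borel)"
  unfolding LM_def using LL_meas by measurable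

lemma LM_meas1: "LM T z \<in> borel_measurable borel"
proof -
  have "(\<lambda>x. (z, x)) \<in> measurable borel ((borel \<Otimes>\<^sub>M borel) \<Otimes>\<^sub>M borel)" by (intro measurable_Pair measurable_const measurable_ident_sets) (auto simp: space_pair_measure)
  from measurable_compose[OF this LM_meas] show ?thesis by simp
qed

end


context wd begin
lemma GM_meas: "(\<lambda>t. GM T (fst t) (snd t)) \<in> borel_measurable (borel \<Otimes>\<^sub>M borel)"
proof -
  have [measurable]: "(\<lambda>t::'a\<times>'a. LM T z (snd t)) \<in> borel_measurable (borel \<Otimes>\<^sub>M borel)" for z
    by (rule measurable_compose[OF measurable_snd LM_meas1])
  show ?thesis unfolding GM_def by measurable
qed

lemma GM_meas1: "GM T xh \<in> borel_measurable borel"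
proof -
  have "(\<lambda>x. (xh, x)) \<in> measurable borel (borel \<Otimes>\<^sub>M borel)"
    by (intro measurable_Pair measurable_const measurable_ident_sets) (auto simp: space_pair_measure)
  from measurable_compose[OF this GM_meas] show ?thesis by simp
qed

lemma ZX_meas: "ZX T \<in> borel_measurable borel"
proof -
  have s: "sets (borel \<Otimes>\<^sub>M nuX) = sets ((borel::'a measure) \<Otimes>\<^sub>M (borel :: 'a measure))"
    by (intro sets_pair_measure_cong refl setsX)
  have "(\<lambda>(xh, x). ennreal (exp (GM T xh x))) \<in> borel_measurable (borel \<Otimes>\<^sub>M nuX)"
    unfolding measurable_cong_sets[OF s refl] using GM_meas by (simp add: case_prod_beta') 
  from sigma_finite_measure.borel_measurable_nn_integral[OF sf_X this]
  show ?thesis unfolding ZX_def by simp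
qed

lemma KM_meas: "KM T \<in> borel_measurable borel"
proof -
  have "(\<lambda>x. ln (enn2real x)) \<in> borel_measurable (borel :: ennreal measure)" by measurable
  from measurable_compose[OF ZX_meas this] show ?thesis unfolding KM_def by (simp add: comp_def)
qed


lemma wt_nonneg: "wt z \<ge> 0" unfolding wt_def by simp

lemma LL_ub: "\<exists>B. \<forall>x. LL z x \<le> B"
proof -
  define C where "C = (\<integral>\<^sup>+ y. ennreal (exp (- (1/eps) * norm (y - snd z) powr p)) \<partial>nuY)"
  have Cfin: "C < \<infinity>" unfolding C_def using CY_fin[of "1/eps" "snd z"] eps by simp
  define B where "B = max 0 (ln (exp (nb / aa) * enn2real C))"
  have "LL z x \<le> B" for x
  proof (cases "enn2real (ZY z x) = 0")
    case True then show ?thesis unfolding LL_def B_def by simp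
  next
    case False
    then have pos: "enn2real (ZY z x) > 0" using enn2real_nonneg[of "ZY z x"] by linarith
    have "ZY z x \<le> ennreal (exp (nb / aa)) * C" using ZY_le[of z x] unfolding C_def .
    then have "enn2real (ZY z x) \<le> enn2real (ennreal (exp (nb / aa)) * C)"
      using Cfin by (intro enn2real_mono) (auto simp: ennreal_mult_less_top)
    also have "\<dots> = exp (nb / aa) * enn2real C" by (simp add: enn2real_mult)
    finally have "ln (enn2real (ZY z x)) \<le> ln (exp (nb / aa) * enn2real C)"
      using pos by (intro ln_mono) auto
    then show ?thesis unfolding LL_def B_def by simp
  qed
  then show ?thesis by blast
qed

lemma LM_lb: "- T \<le> LM T z x" unfolding LM_def by simp

lemma LM_ub: "\<exists>B. \<forall>x. LM T z x \<le> B"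
proof -
  obtain B where "\<forall>x. LL z x \<le> B" using LL_ub by blast
  then have "\<forall>x. LM T z x \<le> max B (- T)" unfolding LM_def by (meson max.mono order_refl)
  then show ?thesis by blast
qed

lemma LM_bound: "\<exists>C. \<forall>z\<in>set_pmf Ph. \<forall>x. \<bar>LM T z x\<bar> \<le> C"
proof -
  obtain Bf where Bf: "\<And>z x. LM T z x \<le> Bf z" using LM_ub by metis
  define C where "C = (\<Sum>z\<in>set_pmf Ph. \<bar>Bf z\<bar>) + \<bar>T\<bar>"
  have "\<bar>LM T z x\<bar> \<le> C" if z: "z \<in> set_pmf Ph" for z x
  proof -
    have "\<bar>Bf z\<bar> \<le> (\<Sum>z\<in>set_pmf Ph. \<bar>Bf z\<bar>)"
      using z finS by (intro member_le_sum) auto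
    then show ?thesis using Bf[of z x] LM_lb[of T z x] unfolding C_def by linarith
  qed
  then show ?thesis by blast
qed

lemma GM_bound: "\<exists>C. \<forall>xh x. \<bar>GM T xh x\<bar> \<le> C"
proof -
  obtain C where C: "\<forall>z\<in>set_pmf Ph. \<forall>x. \<bar>LM T z x\<bar> \<le> C" using LM_bound by blast
  have "\<bar>GM T xh x\<bar> \<le> (\<Sum>z\<in>set_pmf Ph. wt z * C)" for xh x
  proof -
    have "\<bar>GM T xh x\<bar> \<le> (\<Sum>z\<in>set_pmf Ph. \<bar>if fst z = xh then wt z * LM T z x else 0\<bar>)"
      unfolding GM_def by (rule sum_abs)
    also have "\<dots> \<le> (\<Sum>z\<in>set_pmf Ph. wt z * C)"
    proof (intro sum_mono)
      fix z assume z: "z \<in> set_pmf Ph"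
      have "0 \<le> C" using C z by (meson abs_ge_zero order_trans)
      then show "\<bar>if fst z = xh then wt z * LM T z x else 0\<bar> \<le> wt z * C"
        using C z wt_nonneg[of z] by (auto simp: abs_mult intro: mult_left_mono)
    qed
    finally show ?thesis .
  qed
  then show ?thesis by blast
qed

lemma ZX_bounds: "\<exists>A B. 0 < A \<and> (\<forall>xh. ennreal A * emeasure nuX UNIV \<le> ZX T xh \<and> ZX T xh \<le> ennreal B * emeasure nuX UNIV)"
proof -
  obtain C where C: "\<forall>xh x. \<bar>GM T xh x\<bar> \<le> C" using GM_bound by blast
  have lo: "ennreal (exp (- C)) * emeasure nuX UNIV \<le> ZX T xh" for xh
  proof -
    have "ennreal (exp (- C)) * emeasure nuX UNIV = (\<integral>\<^sup>+ x. ennreal (exp (- C)) \<partial>nuX)" by simp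
    also have "\<dots> \<le> ZX T xh" unfolding ZX_def
    proof (intro nn_integral_mono ennreal_leI)
      fix x have "- C \<le> GM T xh x" using C[rule_format, of xh x] by (simp add: abs_le_iff)
      then show "exp (- C) \<le> exp (GM T xh x)" by simp
    qed
    finally show ?thesis .
  qed
  have hi: "ZX T xh \<le> ennreal (exp C) * emeasure nuX UNIV" for xh
  proof -
    have "ZX T xh \<le> (\<integral>\<^sup>+ x. ennreal (exp C) \<partial>nuX)" unfolding ZX_def
    proof (intro nn_integral_mono ennreal_leI)
      fix x have "GM T xh x \<le> C" using C[rule_format, of xh x] by (simp add: abs_le_iff)
      then show "exp (GM T xh x) \<le> exp C" by simp
    qed
    also have "\<dots> = ennreal (exp C) * emeasure nuX UNIV" by simp
    finally show ?thesis .
  qed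
  show ?thesis using lo hi by (intro exI[of _ "exp (- C)"] exI[of _ "exp C"]) auto
qed

lemma nuX_fin: "emeasure nuX UNIV < \<infinity>" using finX by simp

lemma ZX_fin: "ZX T xh < \<infinity>"
proof -
  obtain B where "ZX T xh \<le> ennreal B * emeasure nuX UNIV" using ZX_bounds[of T] by blast
  also have "\<dots> < \<infinity>" using nuX_fin by (simp add: ennreal_mult_less_top)
  finally show ?thesis .
qed

lemma KM_bound: "\<exists>C. \<forall>xh. \<bar>KM T xh\<bar> \<le> C"
proof -
  obtain A B where AB: "0 < A" "\<And>xh. ennreal A * emeasure nuX UNIV \<le> ZX T xh" "\<And>xh. ZX T xh \<le> ennreal B * emeasure nuX UNIV"
    using ZX_bounds[of T] by blast
  define mr where "mr = enn2real (emeasure nuX UNIV)"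
  have m: "emeasure nuX UNIV = ennreal mr" unfolding mr_def using nuX_fin by (simp add: ennreal_enn2real_if)
  have "\<bar>KM T xh\<bar> \<le> \<bar>ln (A * mr)\<bar> + \<bar>ln (B * mr)\<bar>" for xh
  proof (cases "enn2real (ZX T xh) = 0")
    case True then show ?thesis unfolding KM_def by simp
  next
    case False
    then have pos: "enn2real (ZX T xh) > 0" using enn2real_nonneg[of "ZX T xh"] by linarith
    have mr0: "mr \<ge> 0" unfolding mr_def by simp
    have "B \<ge> 0"
    proof (rule ccontr)
      assume "\<not> B \<ge> 0" then have "ennreal B = 0" by (simp add: ennreal_eq_0_iff)
      then have "ZX T xh = 0" using AB(3)[of xh] by simp
      then show False using pos by simp
    qed
    have lo: "A * mr \<le> enn2real (ZX T xh)"
    proof -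
      have "enn2real (ennreal A * emeasure nuX UNIV) \<le> enn2real (ZX T xh)"
        using AB(2)[of xh] ZX_fin[of T xh] by (intro enn2real_mono) auto
      then show ?thesis using AB(1) mr0 by (simp add: m enn2real_mult)
    qed
    have hi: "enn2real (ZX T xh) \<le> B * mr"
    proof -
      have "enn2real (ZX T xh) \<le> enn2real (ennreal B * emeasure nuX UNIV)"
        using AB(3)[of xh] nuX_fin by (intro enn2real_mono) (auto simp: ennreal_mult_less_top)
      then show ?thesis using \<open>B \<ge> 0\<close> mr0 by (simp add: m enn2real_mult)
    qed
    have "mr \<noteq> 0" using hi pos by auto
    then have Am: "A * mr > 0" using AB(1) mr0 by simp
    have "ln (A * mr) \<le> ln (enn2real (ZX T xh))" using lo Am by (intro ln_mono) auto
    moreover have "ln (enn2real (ZX T xh)) \<le> ln (B * mr)" using hi pos by (intro ln_mono) auto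
    ultimately show ?thesis unfolding KM_def by linarith
  qed
  then show ?thesis by blast
qed

definition "phi T w = (psi (snd w) - lam * cost_p p (fst w) (snd w)) / aa - LM T (fst w) (fst (snd w))
   + GM T (fst (fst w)) (fst (snd w)) - KM T (fst (fst w))"

lemma phi_meas: "phi T \<in> borel_measurable ((borel \<Otimes>\<^sub>M borel) \<Otimes>\<^sub>M (borel \<Otimes>\<^sub>M borel))"
proof -
  have [measurable]: "(\<lambda>w::('a\<times>'b)\<times>('a\<times>'b). psi (snd w)) \<in> borel_measurable ((borel \<Otimes>\<^sub>M borel) \<Otimes>\<^sub>M (borel \<Otimes>\<^sub>M borel))"
    by (rule measurable_compose[OF measurable_snd psi_meas])
  have [measurable]: "(\<lambda>w::('a\<times>'b)\<times>('a\<times>'b). LM T (fst w) (fst (snd w))) \<in> borel_measurable ((borel \<Otimes>\<^sub>M borel) \<Otimes>\<^sub>M (borel \<Otimes>\<^sub>M borel))"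
    by (rule meas_comp2[OF LM_meas]) measurable
  have [measurable]: "(\<lambda>w::('a\<times>'b)\<times>('a\<times>'b). GM T (fst (fst w)) (fst (snd w))) \<in> borel_measurable ((borel \<Otimes>\<^sub>M borel) \<Otimes>\<^sub>M (borel \<Otimes>\<^sub>M borel))"
    by (rule meas_comp2[OF GM_meas]) measurable
  have [measurable]: "(\<lambda>w::('a\<times>'b)\<times>('a\<times>'b). KM T (fst (fst w))) \<in> borel_measurable ((borel \<Otimes>\<^sub>M borel) \<Otimes>\<^sub>M (borel \<Otimes>\<^sub>M borel))"
    by (rule measurable_compose[OF _ KM_meas]) measurable
  show ?thesis unfolding phi_def by measurable
qed

lemma int_Y_le: "(\<integral>\<^sup>+ y. ennreal (exp (phi T (z, (x, y)))) \<partial>nuY) \<le> ennreal (exp (GM T (fst z) x - KM T (fst z)))"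
proof -
  define c where "c = exp (- LM T z x + GM T (fst z) x - KM T (fst z))"
  have eq: "ennreal (exp (phi T (z, (x, y)))) = ennreal (exp ((psi (x, y) - lam * cost_p p z (x, y)) / aa)) * ennreal c" for y
    unfolding phi_def c_def by (simp add: ennreal_mult[symmetric] exp_add[symmetric] exp_diff[symmetric])
  have m: "(\<lambda>y. ennreal (exp ((psi (x, y) - lam * cost_p p z (x, y)) / aa))) \<in> borel_measurable nuY"
  proof -
    have "(\<lambda>y. (x, y)) \<in> measurable borel (borel \<Otimes>\<^sub>M borel)"
      by (intro measurable_Pair measurable_const measurable_ident_sets) (auto simp: space_pair_measure)
    then have [measurable]: "(\<lambda>y. psi (x, y)) \<in> borel_measurable borel"
      using measurable_compose psi_meas by blast
    show ?thesis unfolding measurable_Y_cong cost_p_def fst_conv snd_conv by measurable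
  qed
  have "(\<integral>\<^sup>+ y. ennreal (exp (phi T (z, (x, y)))) \<partial>nuY) = ZY z x * ennreal c"
    unfolding eq ZY_def by (rule nn_integral_multc[OF m])
  also have "\<dots> \<le> ennreal (exp (GM T (fst z) x - KM T (fst z)))"
  proof -
    define t where "t = enn2real (ZY z x)"
    have Zt: "ZY z x = ennreal t" unfolding t_def using ZY_fin[of z x] by (simp add: ennreal_enn2real_if)
    have t0: "t \<ge> 0" unfolding t_def by simp
    have "t * c \<le> exp (GM T (fst z) x - KM T (fst z))"
    proof (cases "t = 0")
      case True then show ?thesis by simp
    next
      case False
      then have tp: "t > 0" using t0 by simp
      have "ln t \<le> LM T z x" unfolding LM_def LL_def t_def by simp
      then have "exp (- LM T z x) \<le> exp (- ln t)" by simp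
      also have "\<dots> = 1 / t" using tp by (simp add: exp_minus inverse_eq_divide)
      finally have "t * exp (- LM T z x) \<le> 1" using tp by (simp add: field_simps)
      then have "t * exp (- LM T z x) * exp (GM T (fst z) x - KM T (fst z)) \<le> exp (GM T (fst z) x - KM T (fst z))"
        by (simp add: mult_left_le_one_le)
      then show ?thesis unfolding c_def by (simp add: exp_add[symmetric] exp_diff mult.assoc)
    qed
    moreover have "ennreal t * ennreal c = ennreal (t * c)" using t0 unfolding c_def by (simp add: ennreal_mult)
    ultimately show ?thesis unfolding Zt by (simp add: ennreal_leI)
  qed
  finally show ?thesis .
qed

lemma int_X_le: "(\<integral>\<^sup>+ x. ennreal (exp (GM T xh x - KM T xh)) \<partial>nuX) \<le> 1"
proof -
  have eq: "ennreal (exp (GM T xh x - KM T xh)) = ennreal (exp (GM T xh x)) * ennreal (exp (- KM T xh))" for x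
    by (simp add: ennreal_mult[symmetric] exp_diff exp_minus field_simps)
  have m: "(\<lambda>x. ennreal (exp (GM T xh x))) \<in> borel_measurable nuX"
    unfolding measurable_X_cong using GM_meas1 by measurable
  have "(\<integral>\<^sup>+ x. ennreal (exp (GM T xh x - KM T xh)) \<partial>nuX) = ZX T xh * ennreal (exp (- KM T xh))"
    unfolding eq ZX_def by (rule nn_integral_multc[OF m])
  also have "\<dots> \<le> 1"
  proof -
    define s where "s = enn2real (ZX T xh)"
    have Zs: "ZX T xh = ennreal s" unfolding s_def using ZX_fin[of T xh] by (simp add: ennreal_enn2real_if)
    have s0: "s \<ge> 0" unfolding s_def by simp
    have "s * exp (- KM T xh) \<le> 1"
    proof (cases "s = 0")
      case True then show ?thesis by simp
    next
      case False
      then have sp: "s > 0" using s0 by simp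
      have "KM T xh = ln s" unfolding KM_def s_def by simp
      then show ?thesis using sp by (simp add: exp_minus)
    qed
    then show ?thesis unfolding Zs using s0 by (simp add: ennreal_mult[symmetric] ennreal_leI)
  qed
  finally show ?thesis .
qed

end


lemma sets_emp: fixes Ph :: "('a::euclidean_space \<times> 'b::euclidean_space) pmf" shows "sets (emp_measure Ph) = sets (borel \<Otimes>\<^sub>M borel)"
  unfolding emp_measure_def borel_prod by simp

lemma space_emp[simp]: "space (emp_measure Ph) = UNIV"
  unfolding emp_measure_def by simp

lemma emp_prob: "prob_space (emp_measure Ph)"
  unfolding emp_measure_def by (intro prob_space.prob_space_distr prob_space_measure_pmf) simp

lemma emp_AE: fixes Ph :: "('a::euclidean_space \<times> 'b::euclidean_space) pmf" assumes "finite (set_pmf Ph)" shows "AE z in emp_measure Ph. z \<in> set_pmf Ph"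
proof -
  have "set_pmf Ph \<in> sets borel" using assms by (intro borel_closed finite_imp_closed)
  have "AE z in measure_pmf Ph. z \<in> set_pmf Ph" by (rule AE_measure_pmf)
  moreover have "(\<lambda>z. z) \<in> measurable (measure_pmf Ph) borel" by simp
  ultimately show ?thesis unfolding emp_measure_def
    by (subst AE_distr_iff) (auto intro!: AE_measure_pmf simp: \<open>set_pmf Ph \<in> sets borel\<close>)
qed

context wd begin

lemma sets_ref: "sets (ref_measure (emp_measure Ph) nuX nuY) = sets ((borel \<Otimes>\<^sub>M borel) \<Otimes>\<^sub>M (borel \<Otimes>\<^sub>M borel))"
  unfolding ref_measure_def by (intro sets_pair_measure_cong sets_emp setsX setsY)

lemma sets_XY: "sets (nuX \<Otimes>\<^sub>M nuY) = sets (borel \<Otimes>\<^sub>M borel)"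
  by (intro sets_pair_measure_cong setsX setsY)

lemma sf_XY: "sigma_finite_measure (nuX \<Otimes>\<^sub>M nuY)"
  by (intro sigma_finite_pair_measure sf_X sf_Y)

lemma sf_ref: "sigma_finite_measure (ref_measure (emp_measure Ph) nuX nuY)"
  unfolding ref_measure_def
  by (intro sigma_finite_pair_measure sf_XY prob_space_imp_sigma_finite emp_prob)

lemma int_total: "(\<integral>\<^sup>+ w. ennreal (exp (phi T w)) \<partial>ref_measure (emp_measure Ph) nuX nuY) \<le> 1"
proof -
  have pm: "phi T \<in> borel_measurable ((borel \<Otimes>\<^sub>M borel) \<Otimes>\<^sub>M (borel \<Otimes>\<^sub>M borel))" by (rule phi_meas)
  have m1: "(\<lambda>w. ennreal (exp (phi T w))) \<in> borel_measurable (emp_measure Ph \<Otimes>\<^sub>M (nuX \<Otimes>\<^sub>M nuY))"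
    using sets_ref unfolding ref_measure_def
    by (subst measurable_cong_sets[of _ "(borel \<Otimes>\<^sub>M borel) \<Otimes>\<^sub>M (borel \<Otimes>\<^sub>M borel)"]) (use pm in auto)
  have inner: "(\<integral>\<^sup>+ v. ennreal (exp (phi T (z, v))) \<partial>(nuX \<Otimes>\<^sub>M nuY)) \<le> 1" for z
  proof -
    have "(\<lambda>v. (z, v)) \<in> measurable (borel \<Otimes>\<^sub>M borel) ((borel \<Otimes>\<^sub>M borel) \<Otimes>\<^sub>M (borel \<Otimes>\<^sub>M borel))"
      by (intro measurable_Pair measurable_const measurable_ident_sets) (auto simp: space_pair_measure)
    from measurable_compose[OF this pm]
    have "(\<lambda>v. ennreal (exp (phi T (z, v)))) \<in> borel_measurable (nuX \<Otimes>\<^sub>M nuY)"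
      by (subst measurable_cong_sets[OF sets_XY refl]) measurable
    then have "(\<integral>\<^sup>+ v. ennreal (exp (phi T (z, v))) \<partial>(nuX \<Otimes>\<^sub>M nuY))
        = (\<integral>\<^sup>+ x. \<integral>\<^sup>+ y. ennreal (exp (phi T (z, (x, y)))) \<partial>nuY \<partial>nuX)"
      by (subst sigma_finite_measure.nn_integral_fst[OF sf_Y, symmetric]) auto
    also have "\<dots> \<le> (\<integral>\<^sup>+ x. ennreal (exp (GM T (fst z) x - KM T (fst z))) \<partial>nuX)"
      by (intro nn_integral_mono int_Y_le)
    also have "\<dots> \<le> 1" by (rule int_X_le)
    finally show ?thesis .
  qed
  have "(\<integral>\<^sup>+ w. ennreal (exp (phi T w)) \<partial>ref_measure (emp_measure Ph) nuX nuY)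
      = (\<integral>\<^sup>+ z. \<integral>\<^sup>+ v. ennreal (exp (phi T (z, v))) \<partial>(nuX \<Otimes>\<^sub>M nuY) \<partial>emp_measure Ph)"
    unfolding ref_measure_def
    by (subst sigma_finite_measure.nn_integral_fst[OF sf_XY, symmetric]) (use m1 in auto)
  also have "\<dots> \<le> (\<integral>\<^sup>+ z. 1 \<partial>emp_measure Ph)" by (intro nn_integral_mono inner)
  also have "\<dots> = 1" using prob_space.emeasure_space_1[OF emp_prob] by simp
  finally show ?thesis .
qed

end

locale wdg = wd +
  fixes gam :: "(('a \<times> 'b) \<times> ('a \<times> 'b)) measure" and P :: "('a \<times> 'b) measure"
  assumes gs: "sets gam = sets (ref_measure (emp_measure Ph) nuX nuY)"
    and cp: "is_coupling gam (emp_measure Ph) P"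
    and cs: "is_causal gam"
begin

lemma gam_prob: "prob_space gam" using cp unfolding is_coupling_def by simp

lemma sets_gam: "sets gam = sets ((borel \<Otimes>\<^sub>M borel) \<Otimes>\<^sub>M (borel \<Otimes>\<^sub>M borel))"
  using gs sets_ref by simp

lemma space_gam[simp]: "space gam = UNIV"
  using sets_eq_imp_space_eq[OF sets_gam] by (simp add: space_pair_measure)

lemma meas_gam: "measurable gam = measurable ((borel \<Otimes>\<^sub>M borel) \<Otimes>\<^sub>M (borel \<Otimes>\<^sub>M borel))"
  by (intro ext measurable_cong_sets sets_gam refl)

lemma fst_meas: "fst \<in> measurable gam borel"
  unfolding meas_gam borel_prod[symmetric] by measurable

lemma snd_meas: "snd \<in> measurable gam borel"
  unfolding meas_gam borel_prod[symmetric] by measurable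

lemma distr_fst: "distr gam borel fst = emp_measure Ph" using cp unfolding is_coupling_def by simp
lemma distr_snd: "distr gam borel snd = P" using cp unfolding is_coupling_def by simp

lemma gam_AE_S: "AE w in gam. fst w \<in> set_pmf Ph"
proof -
  have Sb: "set_pmf Ph \<in> sets borel" using finS by (intro borel_closed finite_imp_closed)
  have "AE z in distr gam borel fst. z \<in> set_pmf Ph" unfolding distr_fst by (rule emp_AE[OF finS])
  then show ?thesis using Sb by (subst (asm) AE_distr_iff[OF fst_meas]) auto
qed

lemma measure_emp: "A \<in> sets borel \<Longrightarrow> measure (emp_measure Ph) A = measure (measure_pmf Ph) A"
  unfolding emp_measure_def by (subst measure_distr) auto

lemma gam_fst_eq: "measure gam {w. fst w = z} = pmf Ph z"
proof -
  have "measure gam {w. fst w = z} = measure (distr gam borel fst) {z}"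
    by (subst measure_distr[OF fst_meas]) (auto simp: vimage_def)
  also have "\<dots> = pmf Ph z" unfolding distr_fst by (subst measure_emp) (auto simp: measure_pmf_single)
  finally show ?thesis .
qed

lemma gam_fstfst_eq: "measure gam {w. fst (fst w) = xh} = pmf (map_pmf fst Ph) xh"
proof -
  have c: "closed {z :: 'a \<times> 'b. fst z = xh}"
    by (intro closed_Collect_eq continuous_on_fst continuous_on_const continuous_on_id)
  have "measure gam {w. fst (fst w) = xh} = measure (distr gam borel fst) {z. fst z = xh}"
    using c by (subst measure_distr[OF fst_meas]) (auto simp: vimage_def)
  also have "\<dots> = pmf (map_pmf fst Ph) xh" unfolding distr_fst using c
    by (subst measure_emp) (auto simp: pmf_map vimage_def)
  finally show ?thesis .
qed

lemma fstsnd_meas: "(\<lambda>w. fst (snd w)) \<in> measurable gam borel"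
  unfolding meas_gam by measurable

lemma E1_sets: "{w. fst w = z0} \<in> sets gam"
proof -
  have "fst -` {z0} \<inter> space gam \<in> sets gam" by (rule measurable_sets[OF fst_meas]) simp
  then show ?thesis by (simp add: vimage_def)
qed

lemma E2_sets: "{w. fst (fst w) = xh} \<in> sets gam"
proof -
  have c: "closed {z :: 'a \<times> 'b. fst z = xh}"
    by (intro closed_Collect_eq continuous_on_fst continuous_on_const continuous_on_id)
  have "fst -` {z :: 'a \<times> 'b. fst z = xh} \<inter> space gam \<in> sets gam" by (rule measurable_sets[OF fst_meas]) (use c in simp)
  then show ?thesis by (simp add: vimage_def)
qed

lemma causal_meas:
  assumes A: "A \<in> sets borel"
  shows "measure gam {w. fst (snd w) \<in> A \<and> fst w = z0} * pmf (map_pmf fst Ph) (fst z0)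
       = measure gam {w. fst (snd w) \<in> A \<and> fst (fst w) = fst z0} * pmf Ph z0"
proof -
  have "measure gam {w \<in> space gam. fst (snd w) \<in> A \<and> snd (fst w) \<in> {snd z0} \<and> fst (fst w) = fst z0}
          * measure gam {w \<in> space gam. fst (fst w) = fst z0}
        = measure gam {w \<in> space gam. fst (snd w) \<in> A \<and> fst (fst w) = fst z0}
          * measure gam {w \<in> space gam. snd (fst w) \<in> {snd z0} \<and> fst (fst w) = fst z0}"
  proof -
    have B: "{snd z0} \<in> sets borel" by simp
    from cs have "\<forall>A \<in> sets borel. \<forall>B \<in> sets borel.
        measure gam {w \<in> space gam. fst (snd w) \<in> A \<and> snd (fst w) \<in> B \<and> fst (fst w) = fst z0}
          * measure gam {w \<in> space gam. fst (fst w) = fst z0}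
        = measure gam {w \<in> space gam. fst (snd w) \<in> A \<and> fst (fst w) = fst z0}
          * measure gam {w \<in> space gam. snd (fst w) \<in> B \<and> fst (fst w) = fst z0}"
      unfolding is_causal_def by (rule spec)
    then show ?thesis using A B by blast
  qed
  moreover have "{w \<in> space gam. fst (snd w) \<in> A \<and> snd (fst w) \<in> {snd z0} \<and> fst (fst w) = fst z0}
      = {w. fst (snd w) \<in> A \<and> fst w = z0}" by (auto simp: prod_eq_iff)
  moreover have "{w \<in> space gam. snd (fst w) \<in> {snd z0} \<and> fst (fst w) = fst z0} = {w. fst w = z0}"
    by (auto simp: prod_eq_iff)
  ultimately show ?thesis using gam_fst_eq[of z0] gam_fstfst_eq[of "fst z0"] by simp
qed

lemma causal_int:
  assumes hm: "h \<in> borel_measurable borel"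
  shows "pmf (map_pmf fst Ph) (fst z0) * (\<integral> w. indicator {w. fst w = z0} w * h (fst (snd w)) \<partial>gam)
       = pmf Ph z0 * (\<integral> w. indicator {w. fst (fst w) = fst z0} w * h (fst (snd w)) \<partial>gam)"
proof -
  interpret G: prob_space gam by (rule gam_prob)
  define E1 where "E1 = {w :: ('a \<times> 'b) \<times> ('a \<times> 'b). fst w = z0}"
  define E2 where "E2 = {w :: ('a \<times> 'b) \<times> ('a \<times> 'b). fst (fst w) = fst z0}"
  define c1 where "c1 = pmf (map_pmf fst Ph) (fst z0)"
  define c2 where "c2 = pmf Ph z0"
  have c1: "c1 \<ge> 0" and c2: "c2 \<ge> 0" unfolding c1_def c2_def by auto
  have E1s: "E1 \<in> sets gam" unfolding E1_def by (rule E1_sets)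
  have E2s: "E2 \<in> sets gam" unfolding E2_def by (rule E2_sets)
  define N1 where "N1 = distr (density gam (\<lambda>w. ennreal (c1 * indicator E1 w))) borel (\<lambda>w. fst (snd w))"
  define N2 where "N2 = distr (density gam (\<lambda>w. ennreal (c2 * indicator E2 w))) borel (\<lambda>w. fst (snd w))"
  have d1m: "(\<lambda>w. c1 * indicator E1 w) \<in> borel_measurable gam" using E1s by measurable
  have d2m: "(\<lambda>w. c2 * indicator E2 w) \<in> borel_measurable gam" using E2s by measurable
  have fsm1: "(\<lambda>w. fst (snd w)) \<in> measurable (density gam (\<lambda>w. ennreal (c1 * indicator E1 w))) borel"
    by (subst measurable_cong_sets[OF sets_density refl]) (rule fstsnd_meas)
  have fsm2: "(\<lambda>w. fst (snd w)) \<in> measurable (density gam (\<lambda>w. ennreal (c2 * indicator E2 w))) borel"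
    by (subst measurable_cong_sets[OF sets_density refl]) (rule fstsnd_meas)
  have em: "emeasure (density gam (\<lambda>w. ennreal (c * indicator E w))) ((\<lambda>w. fst (snd w)) -` A)
      = ennreal (c * measure gam (E \<inter> (\<lambda>w. fst (snd w)) -` A))"
    if "A \<in> sets borel" "E \<in> sets gam" "c \<ge> 0" for A E c
  proof -
    have pre: "(\<lambda>w. fst (snd w)) -` A \<in> sets gam"
      using measurable_sets[OF fstsnd_meas that(1)] by simp
    have "emeasure (density gam (\<lambda>w. ennreal (c * indicator E w))) ((\<lambda>w. fst (snd w)) -` A)
        = (\<integral>\<^sup>+ w. ennreal (c * indicator E w) * indicator ((\<lambda>w. fst (snd w)) -` A) w \<partial>gam)"
      using pre that by (subst emeasure_density) (auto intro!: borel_measurable_indicator)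
    also have "\<dots> = (\<integral>\<^sup>+ w. ennreal c * indicator (E \<inter> (\<lambda>w. fst (snd w)) -` A) w \<partial>gam)"
      by (intro nn_integral_cong) (auto split: split_indicator)
    also have "\<dots> = ennreal c * emeasure gam (E \<inter> (\<lambda>w. fst (snd w)) -` A)"
      using pre that by (intro nn_integral_cmult_indicator) auto
    also have "\<dots> = ennreal (c * measure gam (E \<inter> (\<lambda>w. fst (snd w)) -` A))"
      using that by (simp add: G.emeasure_eq_measure ennreal_mult)
    finally show ?thesis .
  qed
  have "N1 = N2"
  proof (rule measure_eqI)
    show "sets N1 = sets N2" unfolding N1_def N2_def by simp
  next
    fix A assume "A \<in> sets N1"
    then have A: "A \<in> sets borel" unfolding N1_def by simp
    have i1: "E1 \<inter> (\<lambda>w. fst (snd w)) -` A = {w. fst (snd w) \<in> A \<and> fst w = z0}" unfolding E1_def by auto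
    have i2: "E2 \<inter> (\<lambda>w. fst (snd w)) -` A = {w. fst (snd w) \<in> A \<and> fst (fst w) = fst z0}" unfolding E2_def by auto
    have "emeasure N1 A = ennreal (c1 * measure gam (E1 \<inter> (\<lambda>w. fst (snd w)) -` A))"
      unfolding N1_def using A E1s c1 by (subst emeasure_distr[OF fsm1]) (auto intro: em)
    also have "\<dots> = ennreal (c2 * measure gam (E2 \<inter> (\<lambda>w. fst (snd w)) -` A))"
      unfolding i1 i2 c1_def c2_def using causal_meas[OF A, of z0] by (simp add: mult.commute)
    also have "\<dots> = emeasure N2 A"
      unfolding N2_def using A E2s c2 by (subst emeasure_distr[OF fsm2]) (auto intro: em[symmetric])
    finally show "emeasure N1 A = emeasure N2 A" .
  qed
  then have "integral\<^sup>L N1 h = integral\<^sup>L N2 h" by simp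
  moreover have "integral\<^sup>L N1 h = c1 * (\<integral> w. indicator E1 w * h (fst (snd w)) \<partial>gam)"
  proof -
    have "integral\<^sup>L N1 h = (\<integral> w. h (fst (snd w)) \<partial>density gam (\<lambda>w. ennreal (c1 * indicator E1 w)))"
      unfolding N1_def by (rule integral_distr[OF fsm1 hm])
    also have "\<dots> = (\<integral> w. (c1 * indicator E1 w) *\<^sub>R h (fst (snd w)) \<partial>gam)"
      using d1m c1 by (intro integral_density) (auto intro: measurable_compose[OF fstsnd_meas hm])
    also have "\<dots> = c1 * (\<integral> w. indicator E1 w * h (fst (snd w)) \<partial>gam)"
      by (simp add: mult.assoc)
    finally show ?thesis .
  qed
  moreover have "integral\<^sup>L N2 h = c2 * (\<integral> w. indicator E2 w * h (fst (snd w)) \<partial>gam)"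
  proof -
    have "integral\<^sup>L N2 h = (\<integral> w. h (fst (snd w)) \<partial>density gam (\<lambda>w. ennreal (c2 * indicator E2 w)))"
      unfolding N2_def by (rule integral_distr[OF fsm2 hm])
    also have "\<dots> = (\<integral> w. (c2 * indicator E2 w) *\<^sub>R h (fst (snd w)) \<partial>gam)"
      using d2m c2 by (intro integral_density) (auto intro: measurable_compose[OF fstsnd_meas hm])
    also have "\<dots> = c2 * (\<integral> w. indicator E2 w * h (fst (snd w)) \<partial>gam)"
      by (simp add: mult.assoc)
    finally show ?thesis .
  qed
  ultimately show ?thesis unfolding c1_def c2_def E1_def E2_def by simp
qed


end


lemma final_arith:
  fixes PA NA Cc Hp Hn I Bp Bn :: ennreal and lam eps aa k :: real
  assumes lam: "lam > 0" and eps: "eps > 0" and aa: "aa = lam * eps" and PA: "PA < \<infinity>"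
    and Bp: "Bp < \<infinity>" and Bn: "Bn < \<infinity>" and I: "I \<le> 1" and k: "enn2real Bp - enn2real Bn = k"
    and main: "PA + ennreal aa * Hn + ennreal aa + Bn \<le> NA + ennreal lam * Cc + ennreal aa * Hp + ennreal aa * I + Bp"
  shows "enn2ereal PA - enn2ereal NA \<le> ereal lam * (enn2ereal Cc + ereal eps * (enn2ereal Hp - enn2ereal Hn)) + ereal k"
proof -
  have aapos: "aa > 0" using aa lam eps by simp
  show ?thesis
  proof (cases "Cc = \<infinity> \<or> Hp = \<infinity> \<or> NA = \<infinity>")
    case True
    then show ?thesis
    proof (elim disjE)
      assume "Cc = \<infinity>"
      then have R: "enn2ereal Cc + ereal eps * (enn2ereal Hp - enn2ereal Hn) = \<infinity>" by simp
      show ?thesis unfolding R using lam by simp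
    next
      assume "Hp = \<infinity>"
      then have "ereal eps * (enn2ereal Hp - enn2ereal Hn) = \<infinity>" using eps by simp
      then have R: "enn2ereal Cc + ereal eps * (enn2ereal Hp - enn2ereal Hn) = \<infinity>" by simp
      show ?thesis unfolding R using lam by simp
    next
      assume "NA = \<infinity>"
      then have "enn2ereal PA - enn2ereal NA = - \<infinity>" using PA by (cases PA) auto
      then show ?thesis by simp
    qed
  next
    case False
    then have fin: "Cc < \<infinity>" "Hp < \<infinity>" "NA < \<infinity>" by (auto simp: top.not_eq_extremum)
    have I': "I < \<infinity>" unfolding infinity_ennreal_def using I ennreal_one_less_top by (rule le_less_trans)
    have rhsfin: "NA + ennreal lam * Cc + ennreal aa * Hp + ennreal aa * I + Bp < \<infinity>"
      using fin I' Bp by (simp add: ennreal_mult_less_top)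
    have "0 + ennreal aa * Hn + 0 + 0 \<le> PA + ennreal aa * Hn + ennreal aa + Bn" by (intro add_mono) auto
    then have "ennreal aa * Hn \<le> PA + ennreal aa * Hn + ennreal aa + Bn" by simp
    then have "ennreal aa * Hn \<le> NA + ennreal lam * Cc + ennreal aa * Hp + ennreal aa * I + Bp"
      using main by (rule order_trans)
    then have "ennreal aa * Hn < \<infinity>" using rhsfin by (rule le_less_trans)
    then have Hn: "Hn < \<infinity>" using aapos by (auto simp: ennreal_mult_less_top top.not_eq_extremum)
    have ex: "\<exists>r. X = ennreal r \<and> r \<ge> 0" if "X < \<infinity>" for X :: ennreal
      using that by (cases X rule: ennreal_cases) auto
    obtain pa where e1: "PA = ennreal pa" "pa \<ge> 0" using ex[OF PA] by blast
    obtain na where e2: "NA = ennreal na" "na \<ge> 0" using ex[OF fin(3)] by blast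
    obtain cc where e3: "Cc = ennreal cc" "cc \<ge> 0" using ex[OF fin(1)] by blast
    obtain hp where e4: "Hp = ennreal hp" "hp \<ge> 0" using ex[OF fin(2)] by blast
    obtain hn where e5: "Hn = ennreal hn" "hn \<ge> 0" using ex[OF Hn] by blast
    obtain i where e6: "I = ennreal i" "i \<ge> 0" using ex[OF I'] by blast
    obtain bp where e7: "Bp = ennreal bp" "bp \<ge> 0" using ex[OF Bp] by blast
    obtain bn where e8: "Bn = ennreal bn" "bn \<ge> 0" using ex[OF Bn] by blast
    note e = e1(1) e2(1) e3(1) e4(1) e5(1) e6(1) e7(1) e8(1)
    note nn = e1(2) e2(2) e3(2) e4(2) e5(2) e6(2) e7(2) e8(2)
    have i1: "i \<le> 1" using I e by (simp add: ennreal_le_1)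
    have k': "bp - bn = k" using k e nn by simp
    have "ennreal (pa + aa * hn + aa + bn) \<le> ennreal (na + lam * cc + aa * hp + aa * i + bp)"
      using main nn aapos lam unfolding e by (simp add: ennreal_plus[symmetric] ennreal_mult[symmetric] del: ennreal_plus)
    then have r: "pa + aa * hn + aa + bn \<le> na + lam * cc + aa * hp + aa * i + bp"
      using nn aapos lam by (subst (asm) ennreal_le_iff) auto
    have "aa * i \<le> aa" using i1 aapos by simp
    then have r2: "pa - na \<le> lam * (cc + eps * (hp - hn)) + k" using r k' aa by (simp add: algebra_simps)
    have "enn2ereal PA - enn2ereal NA = ereal (pa - na)" using nn unfolding e by simp
    moreover have "ereal lam * (enn2ereal Cc + ereal eps * (enn2ereal Hp - enn2ereal Hn)) + ereal k
        = ereal (lam * (cc + eps * (hp - hn)) + k)" using nn unfolding e by simp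
    ultimately show ?thesis using r2 by simp
  qed
qed
lemma pw_real:
  fixes A C l ph t B aa lam :: real
  assumes aa: "aa > 0" and t: "t > 0" and l: "l = ln t" and ph: "aa * ph = A - lam * C - B"
  shows "max A 0 + aa * max (- l) 0 + aa + max (- B) 0 \<le> max (- A) 0 + lam * C + aa * max l 0 + aa * (exp ph / t) + max B 0"
proof -
  have "ln (exp ph / t) \<le> exp ph / t - 1" using t by (intro ln_le_minus_one) auto
  then have "ph - l \<le> exp ph / t - 1" using t l by (simp add: ln_div)
  then have "aa * (ph - l) \<le> aa * (exp ph / t - 1)" using aa by (intro mult_left_mono) auto
  then have "A + aa \<le> lam * C + aa * l + aa * (exp ph / t) + B" using ph by (simp add: algebra_simps)
  moreover have "A = max A 0 - max (- A) 0" "B = max B 0 - max (- B) 0" by auto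
  moreover have "aa * l = aa * max l 0 - aa * max (- l) 0"
  proof -
    have "l = max l 0 - max (- l) 0" by auto
    then show ?thesis by (metis right_diff_distrib)
  qed
  ultimately show ?thesis by linarith
qed

lemma pw_enn:
  fixes A C l ph t B aa lam :: real
  assumes aa: "aa > 0" and t: "t > 0" and l: "l = ln t" and ph: "aa * ph = A - lam * C - B" and lam: "lam > 0" and C: "C \<ge> 0"
  shows "ennreal A + ennreal aa * ennreal (- l) + ennreal aa + ennreal (- B)
    \<le> ennreal (- A) + ennreal lam * ennreal C + ennreal aa * ennreal l + ennreal aa * (ennreal (exp ph) / ennreal t) + ennreal B"
proof -
  have r: "max A 0 + aa * max (- l) 0 + aa + max (- B) 0 \<le> max (- A) 0 + lam * C + aa * max l 0 + aa * (exp ph / t) + max B 0"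
    by (rule pw_real[OF aa t l ph])
  have e': "ennreal (max x 0) = ennreal x" for x by (simp add: ennreal_neg max_def)
  have m1: "ennreal aa * ennreal (- l) = ennreal (aa * max (- l) 0)"
  proof -
    have "ennreal (aa * max (- l) 0) = ennreal aa * ennreal (max (- l) 0)" using aa by (intro ennreal_mult) auto
    then show ?thesis by (simp only: e')
  qed
  have m2: "ennreal aa * ennreal l = ennreal (aa * max l 0)"
  proof -
    have "ennreal (aa * max l 0) = ennreal aa * ennreal (max l 0)" using aa by (intro ennreal_mult) auto
    then show ?thesis by (simp only: e')
  qed
  have m3: "ennreal lam * ennreal C = ennreal (lam * C)" using lam C by (simp add: ennreal_mult[symmetric])
  have m4: "ennreal aa * (ennreal (exp ph) / ennreal t) = ennreal (aa * (exp ph / t))"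
    using aa t by (simp add: ennreal_mult[symmetric] divide_ennreal)
  have "ennreal A + ennreal aa * ennreal (- l) + ennreal aa + ennreal (- B)
      = ennreal (max A 0) + ennreal (aa * max (- l) 0) + ennreal aa + ennreal (max (- B) 0)"
    using m1 by (simp only: e')
  also have "\<dots> = ennreal (max A 0 + aa * max (- l) 0 + aa + max (- B) 0)"
    using aa by (simp add: ennreal_plus)
  also have "\<dots> \<le> ennreal (max (- A) 0 + lam * C + aa * max l 0 + aa * (exp ph / t) + max B 0)"
    by (rule ennreal_leI[OF r])
  also have "\<dots> = ennreal (max (- A) 0) + ennreal (lam * C) + ennreal (aa * max l 0) + ennreal (aa * (exp ph / t)) + ennreal (max B 0)"
    using aa lam C t by (simp add: ennreal_plus)
  also have "\<dots> = ennreal (- A) + ennreal lam * ennreal C + ennreal aa * ennreal l + ennreal aa * (ennreal (exp ph) / ennreal t) + ennreal B"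
    using m2 m3 m4 by (simp only: e')
  finally show ?thesis .
qed

context wdg begin

lemma pX_pos: "z \<in> set_pmf Ph \<Longrightarrow> pmf (map_pmf fst Ph) (fst z) > 0"
proof -
  assume "z \<in> set_pmf Ph"
  then have "fst z \<in> set_pmf (map_pmf fst Ph)" by simp
  then show ?thesis using pmf_positive by metis
qed

lemma term_meas: "(\<lambda>w::('a\<times>'b)\<times>('a\<times>'b). indicator E w * LM T z (fst (snd w))) \<in> borel_measurable gam" if "E \<in> sets gam"
  using that measurable_compose[OF fstsnd_meas LM_meas1] by measurable

lemma term_int: "integrable gam (\<lambda>w::('a\<times>'b)\<times>('a\<times>'b). indicator E w * LM T z (fst (snd w)))" if "E \<in> sets gam" "z \<in> set_pmf Ph"
proof -
  interpret G: prob_space gam by (rule gam_prob)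
  obtain C where C: "\<forall>z\<in>set_pmf Ph. \<forall>x. \<bar>LM T z x\<bar> \<le> C" using LM_bound by blast
  have Cz: "\<bar>LM T z x\<bar> \<le> C" for x using C that(2) by blast
  have C0: "0 \<le> C" using Cz[of undefined] by linarith
  have "\<bar>indicator E w * LM T z (fst (snd w))\<bar> \<le> C" for w
    using Cz[of "fst (snd w)"] C0 by (simp add: indicator_def)
  then show ?thesis using term_meas[OF that(1)]
    by (intro G.integrable_const_bound[where B=C]) auto
qed

lemma "integrable gam (\<lambda>w. \<Sum>z\<in>set_pmf Ph. indicator {w. fst w = z} w * LM T z (fst (snd w)))"
  apply (rule Bochner_Integration.integrable_sum)
  apply (rule term_int)
  apply (rule E1_sets)
  apply simp
  done

lemma int_G_eq_L:
  "integrable gam (\<lambda>w::('a\<times>'b)\<times>('a\<times>'b). LM T (fst w) (fst (snd w)))"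
  "integrable gam (\<lambda>w::('a\<times>'b)\<times>('a\<times>'b). GM T (fst (fst w)) (fst (snd w)))"
  "integral\<^sup>L gam (\<lambda>w::('a\<times>'b)\<times>('a\<times>'b). GM T (fst (fst w)) (fst (snd w))) = integral\<^sup>L gam (\<lambda>w. LM T (fst w) (fst (snd w)))"
proof -
  define S where "S = set_pmf Ph"
  have L_ae: "AE w in gam. LM T (fst w) (fst (snd w)) = (\<Sum>z\<in>S. indicator {w. fst w = z} w * LM T z (fst (snd w)))"
  proof (rule AE_mp[OF gam_AE_S], intro AE_I2 impI)
    fix w :: "('a\<times>'b)\<times>('a\<times>'b)" assume w: "fst w \<in> set_pmf Ph"
    have "(\<Sum>z\<in>S. indicator {w. fst w = z} w * LM T z (fst (snd w))) = (\<Sum>z\<in>S. if z = fst w then LM T z (fst (snd w)) else 0)"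
      by (intro sum.cong) (auto simp: indicator_def)
    also have "\<dots> = LM T (fst w) (fst (snd w))" using w finS unfolding S_def by simp
    finally show "LM T (fst w) (fst (snd w)) = (\<Sum>z\<in>S. indicator {w. fst w = z} w * LM T z (fst (snd w)))" by simp
  qed
  have G_eq: "GM T (fst (fst w)) (fst (snd w)) = (\<Sum>z\<in>S. wt z * (indicator {w. fst (fst w) = fst z} w * LM T z (fst (snd w))))" for w :: "('a\<times>'b)\<times>('a\<times>'b)"
    unfolding GM_def S_def by (intro sum.cong) (auto simp: indicator_def)
  have iL: "integrable gam (\<lambda>w. \<Sum>z\<in>S. indicator {w. fst w = z} w * LM T z (fst (snd w)))"
    unfolding S_def by (intro Bochner_Integration.integrable_sum term_int E1_sets) auto
  have iG: "integrable gam (\<lambda>w. \<Sum>z\<in>S. wt z * (indicator {w. fst (fst w) = fst z} w * LM T z (fst (snd w))))"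
    unfolding S_def by (intro Bochner_Integration.integrable_sum integrable_mult_right term_int E2_sets) auto
  have mL: "(\<lambda>w. LM T (fst w) (fst (snd w))) \<in> borel_measurable gam"
    unfolding meas_gam by (rule meas_comp2[OF LM_meas]) measurable
  show iL': "integrable gam (\<lambda>w. LM T (fst w) (fst (snd w)))"
    using integrable_cong_AE[OF mL borel_measurable_integrable[OF iL] L_ae] iL by simp
  show "integrable gam (\<lambda>w. GM T (fst (fst w)) (fst (snd w)))" unfolding G_eq by (rule iG)
  have "(\<integral> w. GM T (fst (fst w)) (fst (snd w)) \<partial>gam)
      = (\<Sum>z\<in>S. wt z * (\<integral> w. indicator {w. fst (fst w) = fst z} w * LM T z (fst (snd w)) \<partial>gam))"
    unfolding G_eq S_def by (subst Bochner_Integration.integral_sum) (auto intro!: integrable_mult_right term_int E2_sets)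
  also have "\<dots> = (\<Sum>z\<in>S. (\<integral> w. indicator {w. fst w = z} w * LM T z (fst (snd w)) \<partial>gam))"
  proof (intro sum.cong refl)
    fix z assume z: "z \<in> S"
    have pos: "pmf (map_pmf fst Ph) (fst z) > 0" using pX_pos z unfolding S_def by blast
    have "pmf (map_pmf fst Ph) (fst z) * (\<integral> w. indicator {w. fst w = z} w * LM T z (fst (snd w)) \<partial>gam)
       = pmf Ph z * (\<integral> w. indicator {w. fst (fst w) = fst z} w * LM T z (fst (snd w)) \<partial>gam)"
      by (rule causal_int[OF LM_meas1])
    then show "wt z * (\<integral> w. indicator {w. fst (fst w) = fst z} w * LM T z (fst (snd w)) \<partial>gam)
        = (\<integral> w. indicator {w. fst w = z} w * LM T z (fst (snd w)) \<partial>gam)"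
      unfolding wt_def using pos by (simp add: field_simps)
  qed
  also have "\<dots> = (\<integral> w. (\<Sum>z\<in>S. indicator {w. fst w = z} w * LM T z (fst (snd w))) \<partial>gam)"
    unfolding S_def by (subst Bochner_Integration.integral_sum) (auto intro!: term_int E1_sets)
  also have "\<dots> = (\<integral> w. LM T (fst w) (fst (snd w)) \<partial>gam)"
    using L_ae by (intro integral_cong_AE) (auto simp: mL AE_symmetric intro: borel_measurable_integrable[OF iL])
  finally show "integral\<^sup>L gam (\<lambda>w::('a\<times>'b)\<times>('a\<times>'b). GM T (fst (fst w)) (fst (snd w))) = integral\<^sup>L gam (\<lambda>w. LM T (fst w) (fst (snd w)))" .
qed

lemma int_K:
  "integrable gam (\<lambda>w. KM T (fst (fst w)))"
  "(\<integral> w. KM T (fst (fst w)) \<partial>gam) = (\<Sum>z\<in>set_pmf Ph. pmf Ph z * KM T (fst z))"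
proof -
  interpret G: prob_space gam by (rule gam_prob)
  obtain C where C: "\<forall>xh. \<bar>KM T xh\<bar> \<le> C" using KM_bound by blast
  have fb: "fst \<in> measurable (borel :: ('a \<times> 'b) measure) borel" unfolding borel_prod[symmetric] by measurable
  have km: "(\<lambda>z. KM T (fst z)) \<in> borel_measurable (borel :: ('a \<times> 'b) measure)"
    using measurable_compose[OF fb KM_meas] by (simp add: comp_def)
  show "integrable gam (\<lambda>w. KM T (fst (fst w)))"
    using C measurable_compose[OF fst_meas km] by (intro G.integrable_const_bound[where B=C]) auto
  have "(\<integral> w. KM T (fst (fst w)) \<partial>gam) = (\<integral> z. KM T (fst z) \<partial>distr gam borel fst)"
    by (rule integral_distr[OF fst_meas km, symmetric])
  also have "\<dots> = (\<integral> z. KM T (fst z) \<partial>measure_pmf Ph)"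
    unfolding distr_fst emp_measure_def by (subst integral_distr) (auto simp: km)
  also have "\<dots> = (\<Sum>z\<in>set_pmf Ph. pmf Ph z * KM T (fst z))"
    using finS by (subst integral_measure_pmf[where A="set_pmf Ph"]) auto
  finally show "(\<integral> w. KM T (fst (fst w)) \<partial>gam) = (\<Sum>z\<in>set_pmf Ph. pmf Ph z * KM T (fst z))" .
qed

lemma mult_div_le_enn: fixes a b :: ennreal shows "b * (a / b) \<le> a"
proof (cases "b = 0 \<or> b = top")
  case True then show ?thesis by auto
next
  case False
  then have "b * (a / b) = a" by (simp add: ennreal_times_divide mult.commute[of b a] ennreal_mult_divide_eq)
  then show ?thesis by simp
qed

lemma core:
  "eexpect P (\<lambda>z. ereal (psi z)) \<le> ereal lam * (enn2ereal (\<integral>\<^sup>+ w. ennreal (cost_p p (fst w) (snd w)) \<partial>gam)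
      + ereal eps * rel_entropy gam (ref_measure (emp_measure Ph) nuX nuY))
    + ereal (aa * (\<Sum>z\<in>set_pmf Ph. pmf Ph z * KM T (fst z)))"
proof (cases "absolutely_continuous (ref_measure (emp_measure Ph) nuX nuY) gam")
  case False
  then have "rel_entropy gam (ref_measure (emp_measure Ph) nuX nuY) = \<infinity>" unfolding rel_entropy_def by auto
  then have R: "enn2ereal (\<integral>\<^sup>+ w. ennreal (cost_p p (fst w) (snd w)) \<partial>gam)
      + ereal eps * rel_entropy gam (ref_measure (emp_measure Ph) nuX nuY) = \<infinity>" using eps by simp
  show ?thesis unfolding R using lam by simp
next
  case ac: True
  define mu where "mu = ref_measure (emp_measure Ph) nuX nuY"
  interpret G: prob_space gam by (rule gam_prob)
  have gs': "sets gam = sets mu" unfolding mu_def by (rule gs)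
  define q where "q = RN_deriv mu gam"
  have dens: "density mu q = gam" unfolding q_def mu_def
    by (rule sigma_finite_measure.density_RN_deriv[OF sf_ref ac gs])
  have qm: "q \<in> borel_measurable mu" unfolding q_def by simp
  have qfin: "AE w in gam. q w \<noteq> \<infinity>"
  proof -
    have "AE w in mu. q w \<noteq> \<infinity>" unfolding q_def mu_def
      by (rule sigma_finite_measure.RN_deriv_finite[OF sf_ref prob_space_imp_sigma_finite[OF gam_prob] ac gs])
    then show ?thesis using absolutely_continuous_AE[OF gs' ac[folded mu_def]] by blast
  qed
  have qpos: "AE w in gam. 0 < q w"
    by (subst dens[symmetric], subst AE_density[OF qm]) simp
  define l where "l w = ln (enn2real (q w))" for w :: "('a\<times>'b)\<times>('a\<times>'b)"
  have mg: "measurable gam = measurable ((borel \<Otimes>\<^sub>M borel) \<Otimes>\<^sub>M (borel \<Otimes>\<^sub>M borel))" by (rule meas_gam)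
  have qm': "q \<in> borel_measurable gam" using qm by (simp add: measurable_cong_sets[OF gs' refl])
  have lm: "l \<in> borel_measurable gam" unfolding l_def using qm' by measurable
  have psim: "(\<lambda>w. psi (snd w)) \<in> borel_measurable gam"
    unfolding mg by (rule measurable_compose[OF measurable_snd psi_meas])
  have cm: "(\<lambda>w. cost_p p (fst w) (snd w)) \<in> borel_measurable gam" unfolding mg by (rule cost_meas)
  have phm: "phi T \<in> borel_measurable gam" unfolding mg by (rule phi_meas)
  define Bf where "Bf w = aa * KM T (fst (fst w)) - aa * GM T (fst (fst w)) (fst (snd w)) + aa * LM T (fst w) (fst (snd w))" for w :: "('a\<times>'b)\<times>('a\<times>'b)"
  have iB: "integrable gam Bf" unfolding Bf_def
    by (intro Bochner_Integration.integrable_add Bochner_Integration.integrable_diff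
        Bochner_Integration.integrable_mult_right int_K(1) int_G_eq_L(1,2))
  have Bm: "Bf \<in> borel_measurable gam" using iB by (rule borel_measurable_integrable)
  have intB: "integral\<^sup>L gam Bf = aa * (\<Sum>z\<in>set_pmf Ph. pmf Ph z * KM T (fst z))"
  proof -
    have "integral\<^sup>L gam Bf = aa * integral\<^sup>L gam (\<lambda>w. KM T (fst (fst w))) - aa * integral\<^sup>L gam (\<lambda>w. GM T (fst (fst w)) (fst (snd w)))
        + aa * integral\<^sup>L gam (\<lambda>w. LM T (fst w) (fst (snd w)))"
      unfolding Bf_def
      by (subst Bochner_Integration.integral_add, (intro Bochner_Integration.integrable_add Bochner_Integration.integrable_diff
        Bochner_Integration.integrable_mult_right int_K(1) int_G_eq_L(1,2))+,
        subst Bochner_Integration.integral_diff, (intro Bochner_Integration.integrable_mult_right int_K(1) int_G_eq_L(1,2))+) simp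
    then show ?thesis using int_K(2)[of T] int_G_eq_L(3)[of T] by simp
  qed
  have pw: "AE w in gam. ennreal (psi (snd w)) + ennreal aa * ennreal (- l w) + ennreal aa + ennreal (- Bf w)
    \<le> ennreal (- psi (snd w)) + ennreal lam * ennreal (cost_p p (fst w) (snd w)) + ennreal aa * ennreal (l w)
       + ennreal aa * (ennreal (exp (phi T w)) / q w) + ennreal (Bf w)"
  proof (rule AE_mp[OF AE_conjI[OF qfin qpos]], intro AE_I2 impI)
    fix w assume w: "q w \<noteq> \<infinity> \<and> 0 < q w"
    define t where "t = enn2real (q w)"
    have qt: "q w = ennreal t" unfolding t_def using w by (simp add: ennreal_enn2real_if)
    have "0 < ennreal t" using w unfolding qt by simp
    then have tp: "t > 0" by simp
    have c0: "cost_p p (fst w) (snd w) \<ge> 0" unfolding cost_p_def by simp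
    have lt: "l w = ln t" unfolding l_def t_def by simp
    have ph: "aa * phi T w = psi (snd w) - lam * cost_p p (fst w) (snd w) - Bf w"
      unfolding phi_def Bf_def using lam eps by (simp add: field_simps)
    show "ennreal (psi (snd w)) + ennreal aa * ennreal (- l w) + ennreal aa + ennreal (- Bf w)
    \<le> ennreal (- psi (snd w)) + ennreal lam * ennreal (cost_p p (fst w) (snd w)) + ennreal aa * ennreal (l w)
       + ennreal aa * (ennreal (exp (phi T w)) / q w) + ennreal (Bf w)"
      unfolding qt by (rule pw_enn[OF aa_pos tp lt ph lam c0])
  qed
  note [measurable] = psim lm Bm cm phm qm'
  define PA where "PA = (\<integral>\<^sup>+ w. ennreal (psi (snd w)) \<partial>gam)"
  define NA where "NA = (\<integral>\<^sup>+ w. ennreal (- psi (snd w)) \<partial>gam)"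
  define Cc where "Cc = (\<integral>\<^sup>+ w. ennreal (cost_p p (fst w) (snd w)) \<partial>gam)"
  define Hp where "Hp = (\<integral>\<^sup>+ w. ennreal (l w) \<partial>gam)"
  define Hn where "Hn = (\<integral>\<^sup>+ w. ennreal (- l w) \<partial>gam)"
  define I where "I = (\<integral>\<^sup>+ w. ennreal (exp (phi T w)) / q w \<partial>gam)"
  define Bp where "Bp = (\<integral>\<^sup>+ w. ennreal (Bf w) \<partial>gam)"
  define Bn where "Bn = (\<integral>\<^sup>+ w. ennreal (- Bf w) \<partial>gam)"
  have "(\<integral>\<^sup>+ w. ennreal (psi (snd w)) + ennreal aa * ennreal (- l w) + ennreal aa + ennreal (- Bf w) \<partial>gam)
    \<le> (\<integral>\<^sup>+ w. ennreal (- psi (snd w)) + ennreal lam * ennreal (cost_p p (fst w) (snd w)) + ennreal aa * ennreal (l w)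
       + ennreal aa * (ennreal (exp (phi T w)) / q w) + ennreal (Bf w) \<partial>gam)"
    by (rule nn_integral_mono_AE[OF pw])
  also have "(\<integral>\<^sup>+ w. ennreal (- psi (snd w)) + ennreal lam * ennreal (cost_p p (fst w) (snd w)) + ennreal aa * ennreal (l w)
       + ennreal aa * (ennreal (exp (phi T w)) / q w) + ennreal (Bf w) \<partial>gam)
     = NA + ennreal lam * Cc + ennreal aa * Hp + ennreal aa * I + Bp"
    unfolding NA_def Cc_def Hp_def I_def Bp_def
    by (simp add: nn_integral_add nn_integral_cmult)
  finally have main: "PA + ennreal aa * Hn + ennreal aa + Bn \<le> NA + ennreal lam * Cc + ennreal aa * Hp + ennreal aa * I + Bp"
    unfolding PA_def Hn_def Bn_def
    by (simp add: nn_integral_add nn_integral_cmult G.emeasure_space_1[simplified])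
  have I1: "I \<le> 1"
  proof -
    have mmu: "measurable mu = measurable ((borel \<Otimes>\<^sub>M borel) \<Otimes>\<^sub>M (borel \<Otimes>\<^sub>M borel))"
      unfolding mu_def by (intro ext measurable_cong_sets sets_ref refl)
    have phm': "phi T \<in> borel_measurable mu" unfolding mmu by (rule phi_meas)
    have "I = (\<integral>\<^sup>+ w. ennreal (exp (phi T w)) / q w \<partial>density mu q)" unfolding I_def dens ..
    also have "\<dots> = (\<integral>\<^sup>+ w. q w * (ennreal (exp (phi T w)) / q w) \<partial>mu)"
      using phm' qm by (subst nn_integral_density) auto
    also have "\<dots> \<le> (\<integral>\<^sup>+ w. ennreal (exp (phi T w)) \<partial>mu)"
      by (intro nn_integral_mono mult_div_le_enn)
    also have "\<dots> \<le> 1" unfolding mu_def by (rule int_total)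
    finally show ?thesis .
  qed
  have Bfin: "Bp < \<infinity>" "Bn < \<infinity>" using iB unfolding real_integrable_def Bp_def Bn_def
    by (auto simp: top.not_eq_extremum)
  have kB: "enn2real Bp - enn2real Bn = aa * (\<Sum>z\<in>set_pmf Ph. pmf Ph z * KM T (fst z))"
    using real_lebesgue_integral_def[OF iB] intB unfolding Bp_def Bn_def by simp
  have PAfin: "PA < \<infinity>"
  proof -
    have "PA \<le> (\<integral>\<^sup>+ w. ennreal nb \<partial>gam)" unfolding PA_def
      by (intro nn_integral_mono ennreal_leI psi_le)
    also have "\<dots> = ennreal nb" by (simp add: G.emeasure_space_1[simplified])
    finally show ?thesis by (simp add: le_less_trans)
  qed
  have psib: "(\<lambda>z. psi z) \<in> borel_measurable (borel :: ('a \<times> 'b) measure)"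
    using psi_meas by (simp add: borel_prod)
  have EP: "eexpect P (\<lambda>z. ereal (psi z)) = enn2ereal PA - enn2ereal NA"
  proof -
    have "pos_int P (\<lambda>z. ereal (psi z)) = PA"
      unfolding pos_int_def PA_def distr_snd[symmetric] using psib
      by (subst nn_integral_distr[OF snd_meas]) auto
    moreover have "neg_int P (\<lambda>z. ereal (psi z)) = NA"
      unfolding neg_int_def NA_def distr_snd[symmetric] using psib
      by (subst nn_integral_distr[OF snd_meas]) auto
    ultimately show ?thesis unfolding eexpect_def by simp
  qed
  have RE: "rel_entropy gam mu = enn2ereal Hp - enn2ereal Hn"
    using gs' ac unfolding rel_entropy_def eexpect_def pos_int_def neg_int_def Hp_def Hn_def l_def q_def mu_def
    by simp
  show ?thesis unfolding EP RE[unfolded mu_def] Cc_def[symmetric]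
    by (rule final_arith[OF lam eps refl PAfin Bfin I1 kB main])
qed

end


context wd begin

definition "Ginf xh x = (\<Sum>z\<in>set_pmf Ph. if fst z = xh then wt z * LL z x else 0)"
definition "ZXinf xh = (\<integral>\<^sup>+ x. ennreal (exp (Ginf xh x)) \<partial>nuX)"
definition "Kinf xh = ln (enn2real (ZXinf xh))"

lemma LL_meas1: "LL z \<in> borel_measurable borel"
proof -
  have "(\<lambda>x. (z, x)) \<in> measurable borel ((borel \<Otimes>\<^sub>M borel) \<Otimes>\<^sub>M borel)"
    by (intro measurable_Pair measurable_const measurable_ident_sets) (auto simp: space_pair_measure)
  from measurable_compose[OF this LL_meas] show ?thesis by simp
qed

lemma Ginf_meas1: "Ginf xh \<in> borel_measurable borel"
  unfolding Ginf_def using LL_meas1 by measurable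

lemma G_unif: "\<exists>C. \<forall>T\<ge>0. \<forall>xh x. GM T xh x \<le> C \<and> Ginf xh x \<le> C"
proof -
  obtain Bf where Bf: "\<And>z x. LL z x \<le> Bf z" using LL_ub by metis
  define C where "C = (\<Sum>z\<in>set_pmf Ph. wt z * max (Bf z) 0)"
  have "GM T xh x \<le> C \<and> Ginf xh x \<le> C" if T: "T \<ge> 0" for T xh x
  proof
    show "GM T xh x \<le> C" unfolding GM_def C_def
    proof (intro sum_mono)
      fix z
      have "LM T z x \<le> max (Bf z) 0" unfolding LM_def using Bf[of z x] T by auto
      then show "(if fst z = xh then wt z * LM T z x else 0) \<le> wt z * max (Bf z) 0"
        using wt_nonneg[of z] by (auto intro: mult_left_mono)
    qed
    show "Ginf xh x \<le> C" unfolding Ginf_def C_def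
    proof (intro sum_mono)
      fix z
      have "LL z x \<le> max (Bf z) 0" using Bf[of z x] by auto
      then show "(if fst z = xh then wt z * LL z x else 0) \<le> wt z * max (Bf z) 0"
        using wt_nonneg[of z] by (auto intro: mult_left_mono)
    qed
  qed
  then show ?thesis by blast
qed

lemma GM_lim: "(\<lambda>n. GM (real n) xh x) \<longlonglongrightarrow> Ginf xh x"
proof (rule tendsto_eventually)
  have "\<forall>\<^sub>F n in sequentially. \<forall>z\<in>set_pmf Ph. LM (real n) z x = LL z x"
  proof (rule eventually_ball_finite[OF finS], intro ballI)
    fix z
    have "\<forall>\<^sub>F n in sequentially. nat \<lceil>- LL z x\<rceil> \<le> n" by (rule eventually_ge_at_top)
    then show "\<forall>\<^sub>F n in sequentially. LM (real n) z x = LL z x"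
    proof eventually_elim
      fix n :: nat assume "nat \<lceil>- LL z x\<rceil> \<le> n"
      then have "real (nat \<lceil>- LL z x\<rceil>) \<le> real n" by simp
      then have "- LL z x \<le> real n" using real_nat_ceiling_ge[of "- LL z x"] by linarith
      then show "LM (real n) z x = LL z x" unfolding LM_def by simp
    qed
  qed
  then show "\<forall>\<^sub>F n in sequentially. GM (real n) xh x = Ginf xh x"
    by eventually_elim (auto simp: GM_def Ginf_def intro!: sum.cong)
qed

lemma ZXinf_pos: assumes "emeasure nuX UNIV \<noteq> 0" shows "ZXinf xh \<noteq> 0"
proof
  assume "ZXinf xh = 0"
  then have "AE x in nuX. ennreal (exp (Ginf xh x)) = 0" unfolding ZXinf_def
    using Ginf_meas1 by (subst (asm) nn_integral_0_iff_AE) (auto simp: measurable_X_cong)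
  then have "AE x in nuX. False" by simp
  then have "UNIV \<in> null_sets nuX" by (subst (asm) AE_iff_null) (auto simp: setsX)
  then show False using assms by auto
qed

lemma KM_lim: assumes "emeasure nuX UNIV \<noteq> 0" shows "(\<lambda>n. KM (real n) xh) \<longlonglongrightarrow> Kinf xh"
proof -
  obtain C where C: "\<forall>T\<ge>0. \<forall>xh x. GM T xh x \<le> C \<and> Ginf xh x \<le> C" using G_unif by blast
  have "(\<lambda>n. ZX (real n) xh) \<longlonglongrightarrow> ZXinf xh" unfolding ZX_def ZXinf_def
  proof (rule nn_integral_dominated_convergence[where w="\<lambda>x. ennreal (exp C)"])
    show "(\<lambda>x. ennreal (exp (GM (real i) xh x))) \<in> borel_measurable nuX" for i
      unfolding measurable_X_cong using GM_meas1 by measurable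
    show "(\<lambda>x. ennreal (exp (Ginf xh x))) \<in> borel_measurable nuX"
      unfolding measurable_X_cong using Ginf_meas1 by measurable
    show "(\<lambda>x. ennreal (exp C)) \<in> borel_measurable nuX" by simp
    show "AE x in nuX. ennreal (exp (GM (real j) xh x)) \<le> ennreal (exp C)" for j
      using C by (intro AE_I2 ennreal_leI) auto
    show "(\<integral>\<^sup>+ x. ennreal (exp C) \<partial>nuX) < \<infinity>" using nuX_fin by (simp add: ennreal_mult_less_top)
    show "AE x in nuX. (\<lambda>i. ennreal (exp (GM (real i) xh x))) \<longlonglongrightarrow> ennreal (exp (Ginf xh x))"
      by (intro AE_I2 tendsto_ennrealI tendsto_exp GM_lim)
  qed
  moreover have fin: "ZXinf xh \<noteq> \<infinity>"
  proof -
    have "ZXinf xh \<le> (\<integral>\<^sup>+ x. ennreal (exp C) \<partial>nuX)" unfolding ZXinf_def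
      using C by (intro nn_integral_mono ennreal_leI) auto
    also have "\<dots> < \<infinity>" using nuX_fin by (simp add: ennreal_mult_less_top)
    finally show ?thesis by simp
  qed
  ultimately have "(\<lambda>n. enn2real (ZX (real n) xh)) \<longlonglongrightarrow> enn2real (ZXinf xh)"
    by (intro tendsto_enn2real) (auto simp: ennreal_enn2real_if)
  moreover have "enn2real (ZXinf xh) \<noteq> 0" using fin ZXinf_pos[OF assms, of xh] by (simp add: enn2real_eq_0_iff)
  ultimately have "(\<lambda>n. ln (enn2real (ZX (real n) xh))) \<longlonglongrightarrow> ln (enn2real (ZXinf xh))"
    by (rule tendsto_ln)
  then show ?thesis unfolding KM_def Kinf_def .
qed

lemma bound_lim:
  assumes "\<And>T::nat. E \<le> ereal c + ereal (aa * (\<Sum>z\<in>set_pmf Ph. pmf Ph z * KM (real T) (fst z)))"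
    and "emeasure nuX UNIV \<noteq> 0"
  shows "E \<le> ereal c + ereal (aa * (\<Sum>z\<in>set_pmf Ph. pmf Ph z * Kinf (fst z)))"
proof -
  have lim: "(\<lambda>T. c + aa * (\<Sum>z\<in>set_pmf Ph. pmf Ph z * KM (real T) (fst z))) \<longlonglongrightarrow> c + aa * (\<Sum>z\<in>set_pmf Ph. pmf Ph z * Kinf (fst z))"
    by (intro tendsto_intros KM_lim assms(2))
  show ?thesis
  proof (cases E)
    case (real e)
    have "e \<le> c + aa * (\<Sum>z\<in>set_pmf Ph. pmf Ph z * Kinf (fst z))"
      by (rule LIMSEQ_le_const[OF lim]) (use assms(1) real in auto)
    then show ?thesis using real by simp
  next
    case PInf then show ?thesis using assms(1)[of 0] by simp
  qed simp
qed

end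

lemma eexp_mono: "a \<le> b \<Longrightarrow> eexp a \<le> eexp b"
  unfolding eexp_def by (cases a; cases b) (auto intro: ennreal_leI)

lemma eexp_ereal[simp]: "eexp (ereal r) = ennreal (exp r)"
  unfolding eexp_def by simp

lemma eln_ge: assumes "0 < a" "a < \<infinity>" "a \<le> u" shows "ereal (ln (enn2real a)) \<le> eln u"
proof (cases "u = \<infinity>")
  case True then show ?thesis unfolding eln_def by simp
next
  case False
  have "u \<noteq> 0" using assms by auto
  moreover have "enn2real a \<le> enn2real u" using assms False by (intro enn2real_mono) (auto simp: top.not_eq_extremum)
  moreover have "enn2real a > 0" using assms by (simp add: enn2real_positive_iff)
  ultimately show ?thesis unfolding eln_def using False by auto
qed

lemma "(\<Sum>i\<in>A. (f i :: ereal)) \<le> (\<Sum>i\<in>A. g i)" if "\<And>i. i \<in> A \<Longrightarrow> f i \<le> g i"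
  using that by (rule sum_mono)

context wd begin

lemma ZY_pos: assumes nY: "emeasure nuY UNIV \<noteq> 0" shows "ZY z x \<noteq> 0"
proof
  assume "ZY z x = 0"
  have m: "(\<lambda>y. ennreal (exp ((psi (x, y) - lam * cost_p p z (x, y)) / aa))) \<in> borel_measurable nuY"
  proof -
    have "(\<lambda>y. (x, y)) \<in> measurable borel (borel \<Otimes>\<^sub>M borel)"
      by (intro measurable_Pair measurable_const measurable_ident_sets) (auto simp: space_pair_measure)
    then have [measurable]: "(\<lambda>y. psi (x, y)) \<in> borel_measurable borel"
      using measurable_compose psi_meas by blast
    show ?thesis unfolding measurable_Y_cong cost_p_def fst_conv snd_conv by measurable
  qed
  have "AE y in nuY. ennreal (exp ((psi (x, y) - lam * cost_p p z (x, y)) / aa)) = 0"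
    using \<open>ZY z x = 0\<close> unfolding ZY_def by (subst (asm) nn_integral_0_iff_AE[OF m])
  then have "AE y in nuY. False" by simp
  then have "UNIV \<in> null_sets nuY" by (subst (asm) AE_iff_null) (auto simp: setsY)
  then show False using nY by auto
qed

lemma ZXinf_fin: "ZXinf xh < \<infinity>"
proof -
  obtain C where C: "\<forall>T\<ge>0. \<forall>xh x. GM T xh x \<le> C \<and> Ginf xh x \<le> C" using G_unif by blast
  have "ZXinf xh \<le> (\<integral>\<^sup>+ x. ennreal (exp C) \<partial>nuX)" unfolding ZXinf_def
    using C by (intro nn_integral_mono ennreal_leI) auto
  also have "\<dots> < \<infinity>" using nuX_fin by (simp add: ennreal_mult_less_top)
  finally show ?thesis .
qed

lemma sum_regroup: "(\<Sum>z\<in>set_pmf Ph. pmf Ph z * h (fst z)) = (\<Sum>xh\<in>set_pmf (map_pmf fst Ph). pmf (map_pmf fst Ph) xh * h xh)"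
proof -
  have "(\<Sum>z\<in>set_pmf Ph. pmf Ph z * h (fst z)) = (\<Sum>xh\<in>fst ` set_pmf Ph. \<Sum>z\<in>{z\<in>set_pmf Ph. fst z = xh}. pmf Ph z * h (fst z))"
    using finS by (rule sum.image_gen)
  also have "\<dots> = (\<Sum>xh\<in>fst ` set_pmf Ph. pmf (map_pmf fst Ph) xh * h xh)"
  proof (intro sum.cong refl)
    fix xh
    have "pmf (map_pmf fst Ph) xh = measure (measure_pmf Ph) (fst -` {xh} \<inter> set_pmf Ph)"
      by (simp add: pmf_map measure_Int_set_pmf)
    also have "fst -` {xh} \<inter> set_pmf Ph = {z\<in>set_pmf Ph. fst z = xh}" by auto
    also have "measure (measure_pmf Ph) {z\<in>set_pmf Ph. fst z = xh} = (\<Sum>z\<in>{z\<in>set_pmf Ph. fst z = xh}. pmf Ph z)"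
      using finS by (intro measure_measure_pmf_finite) auto
    finally have "pmf (map_pmf fst Ph) xh = (\<Sum>z\<in>{z\<in>set_pmf Ph. fst z = xh}. pmf Ph z)" .
    then show "(\<Sum>z\<in>{z\<in>set_pmf Ph. fst z = xh}. pmf Ph z * h (fst z)) = pmf (map_pmf fst Ph) xh * h xh"
      by (simp add: sum_distrib_right)
  qed
  finally show ?thesis by simp
qed

lemma dual_ge:
  fixes X :: "'a set" and Y :: "'b set" and Psi :: "'c \<times> 'b \<Rightarrow> ereal" and f :: "'a \<Rightarrow> 'c" and rho :: real
  assumes AX: "AE x in nuX. x \<in> X" and AY: "AE y in nuY. y \<in> Y"
    and le: "\<And>x y. x \<in> X \<Longrightarrow> y \<in> Y \<Longrightarrow> ereal (psi (x, y)) \<le> Psi (f x, y)"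
    and nX: "emeasure nuX UNIV \<noteq> 0" and nY: "emeasure nuY UNIV \<noteq> 0"
  shows "ereal (lam * rho powr p) + ereal (aa * (\<Sum>z\<in>set_pmf Ph. pmf Ph z * Kinf (fst z)))
     \<le> dual_obj p eps rho nuX nuY Psi f Ph lam"
proof -
  define Jy where "Jy z x = (\<integral>\<^sup>+ y. eexp ((Psi (f x, y) - ereal (lam * cost_p p z (x, y))) * ereal (1 / (lam * eps))) \<partial>nuY)" for z x
  have LL_le: "ereal (LL z x) \<le> eln (Jy z x)" if x: "x \<in> X" for z x
  proof -
    have "ZY z x \<le> Jy z x" unfolding ZY_def Jy_def
    proof (rule nn_integral_mono_AE, use AY in eventually_elim)
      fix y assume y: "y \<in> Y"
      have "(ereal (psi (x, y)) - ereal (lam * cost_p p z (x, y))) * ereal (1 / aa)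
          \<le> (Psi (f x, y) - ereal (lam * cost_p p z (x, y))) * ereal (1 / aa)"
        using le[OF x y] aa_pos by (intro ereal_mult_right_mono ereal_minus_mono) auto
      moreover have "(ereal (psi (x, y)) - ereal (lam * cost_p p z (x, y))) * ereal (1 / aa)
          = ereal ((psi (x, y) - lam * cost_p p z (x, y)) / aa)" by simp
      ultimately show "ennreal (exp ((psi (x, y) - lam * cost_p p z (x, y)) / aa))
          \<le> eexp ((Psi (f x, y) - ereal (lam * cost_p p z (x, y))) * ereal (1 / (lam * eps)))"
        using eexp_mono by (metis eexp_ereal)
    qed
    moreover have "0 < ZY z x" using ZY_pos[OF nY] by (simp add: zero_less_iff_neq_zero)
    ultimately show ?thesis unfolding LL_def using ZY_fin by (intro eln_ge) auto
  qed
  define J where "J xh = (\<integral>\<^sup>+ x. eexp (g_fun p eps nuY Psi f Ph xh x lam * ereal (1 / (lam * eps))) \<partial>nuX)" for xh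
  have G_le: "ennreal (exp (Ginf xh x)) \<le> eexp (g_fun p eps nuY Psi f Ph xh x lam * ereal (1 / (lam * eps)))"
    if x: "x \<in> X" for xh x
  proof -
    have "Ginf xh x = (\<Sum>z\<in>{z\<in>set_pmf Ph. fst z = xh}. pmf Ph z / pmf (map_pmf fst Ph) xh * LL z x)"
      unfolding Ginf_def wt_def using finS by (subst sum.inter_filter) (auto intro!: sum.cong)
    then have "ereal (aa * Ginf xh x) = (\<Sum>z\<in>{z\<in>set_pmf Ph. fst z = xh}. ereal (pmf Ph z / pmf (map_pmf fst Ph) xh) * (ereal aa * ereal (LL z x)))"
      by (simp add: sum_distrib_left algebra_simps)
    also have "\<dots> \<le> g_fun p eps nuY Psi f Ph xh x lam" unfolding g_fun_def
    proof (intro sum_mono ereal_mult_left_mono)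
      fix z show "ereal (LL z x) \<le> eln (\<integral>\<^sup>+ y. eexp ((Psi (f x, y) - ereal (lam * cost_p p z (x, y))) * ereal (1 / (lam * eps))) \<partial>nuY)"
        using LL_le[OF x, of z] unfolding Jy_def .
    qed (use aa_pos in auto)
    finally have "ereal (aa * Ginf xh x) * ereal (1 / aa) \<le> g_fun p eps nuY Psi f Ph xh x lam * ereal (1 / (lam * eps))"
      using aa_pos by (intro ereal_mult_right_mono) auto
    moreover have "ereal (aa * Ginf xh x) * ereal (1 / aa) = ereal (Ginf xh x)" using lam eps by simp
    ultimately show ?thesis using eexp_mono by (metis eexp_ereal)
  qed
  have K_le: "ereal (aa * Kinf xh) \<le> ereal aa * eln (J xh)" for xh
  proof -
    have "ZXinf xh \<le> J xh" unfolding ZXinf_def J_def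
      by (rule nn_integral_mono_AE, use AX in eventually_elim) (rule G_le)
    moreover have "0 < ZXinf xh" using ZXinf_pos[OF nX] by (simp add: zero_less_iff_neq_zero)
    ultimately have "ereal (Kinf xh) \<le> eln (J xh)" unfolding Kinf_def using ZXinf_fin by (intro eln_ge) auto
    then have "ereal aa * ereal (Kinf xh) \<le> ereal aa * eln (J xh)" using aa_pos by (intro ereal_mult_left_mono) auto
    then show ?thesis by simp
  qed
  have "ereal (aa * (\<Sum>z\<in>set_pmf Ph. pmf Ph z * Kinf (fst z)))
      = (\<Sum>xh\<in>set_pmf (map_pmf fst Ph). ereal (pmf (map_pmf fst Ph) xh) * ereal (aa * Kinf xh))"
    unfolding sum_regroup by (simp add: sum_distrib_left algebra_simps)
  also have "\<dots> \<le> (\<Sum>xh\<in>set_pmf (map_pmf fst Ph). ereal (pmf (map_pmf fst Ph) xh) * (ereal aa * eln (J xh)))"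
    by (intro sum_mono ereal_mult_left_mono K_le) auto
  finally show ?thesis unfolding dual_obj_def J_def by (intro add_left_mono) simp
qed

end


lemma ereal_inf_aux:
  fixes a :: ereal and V :: "'g \<Rightarrow> ereal"
  assumes lam: "lam > 0" and le: "\<And>g. g \<in> G \<Longrightarrow> a \<le> ereal lam * V g + ereal s"
    and inf: "(INF g\<in>G. V g) \<le> ereal r"
  shows "a \<le> ereal lam * ereal r + ereal s"
proof (rule ccontr)
  assume "\<not> ?thesis"
  then have gt: "ereal (lam * r + s) < a" by simp
  show False
  proof (cases a)
    case PInf
    have "(INF g\<in>G. V g) < ereal (r + 1)" using inf by (rule le_less_trans) simp
    then obtain g where g: "g \<in> G" "V g < ereal (r + 1)" by (auto simp: INF_less_iff)
    then have "V g \<noteq> \<infinity>" by auto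
    then have "ereal lam * V g + ereal s \<noteq> \<infinity>" using lam by (cases "V g") auto
    then show False using le[OF g(1)] PInf lam by auto
  next
    case (real e)
    define c where "c = (e - s) / lam"
    have rc: "r < c" using gt real lam unfolding c_def by (simp add: field_simps)
    have "(INF g\<in>G. V g) < ereal c" using inf by (rule le_less_trans) (use rc in simp)
    then obtain g where g: "g \<in> G" "V g < ereal c" by (auto simp: INF_less_iff)
    have "ereal lam * V g + ereal s < ereal e"
    proof (cases "V g")
      case (real v)
      then have "v < c" using g by simp
      then have "lam * v + s < lam * c + s" using lam by simp
      also have "lam * c + s = e" unfolding c_def using lam by simp
      finally show ?thesis using real by simp
    qed (use g lam in auto)
    then show False using le[OF g(1)] real by simp
  next
    case MInf then show False using gt by simp
  qed
qed

lemma trunc_expect: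
  fixes P :: "'x measure" and u :: "'x \<Rightarrow> ereal" and v :: "nat \<Rightarrow> 'x \<Rightarrow> real" and D :: ereal
  assumes AE: "AE z in P. u z \<noteq> - \<infinity> \<and> (\<forall>n. ereal (v n z) = min (u z) (ereal (real n)))"
    and vm: "\<And>n. v n \<in> borel_measurable P"
    and def: "expect_defined P u"
    and le: "\<And>n. eexpect P (\<lambda>z. ereal (v n z)) \<le> D"
  shows "eexpect P u \<le> D"
proof -
  define pos where "pos n = (\<integral>\<^sup>+ z. ennreal (v n z) \<partial>P)" for n
  have negeq: "(\<integral>\<^sup>+ z. ennreal (- v n z) \<partial>P) = neg_int P u" for n
    unfolding neg_int_def
  proof (rule nn_integral_cong_AE, use AE in eventually_elim)
    fix z assume z: "u z \<noteq> - \<infinity> \<and> (\<forall>n. ereal (v n z) = min (u z) (ereal (real n)))"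
    show "ennreal (- v n z) = e2ennreal (- u z)"
    proof (cases "u z \<le> ereal (real n)")
      case True
      then have "ereal (v n z) = u z" using z by (simp add: min_def)
      then have "- u z = ereal (- v n z)" by (metis uminus_ereal.simps(1))
      then show ?thesis by simp
    next
      case False
      then have "ereal (v n z) = ereal (real n)" using z by (simp add: min_def)
      then have "v n z = real n" by simp
      moreover have "- u z \<le> 0" using False by (cases "u z") auto
      ultimately show ?thesis by (simp add: e2ennreal_neg ennreal_neg)
    qed
  qed
  have posE: "pos_int P u = (SUP n. pos n)"
  proof -
    have "pos_int P u = (\<integral>\<^sup>+ z. (SUP n. ennreal (v n z)) \<partial>P)"
      unfolding pos_int_def
    proof (rule nn_integral_cong_AE, use AE in eventually_elim)
      fix z assume z: "u z \<noteq> - \<infinity> \<and> (\<forall>n. ereal (v n z) = min (u z) (ereal (real n)))"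
      show "e2ennreal (u z) = (SUP n. ennreal (v n z))"
      proof (cases "u z")
        case PInf
        have "ereal (v n z) = ereal (real n)" for n using z PInf by simp
        then have "v n z = real n" for n by simp
        then show ?thesis using PInf by (simp add: ennreal_of_nat_eq_real_of_nat[symmetric] ennreal_SUP_of_nat_eq_top)
      next
        case (real r)
        have vm0: "ereal (v n z) = min (ereal r) (ereal (real n))" for n using z real by simp
        have vmin: "v n z = min r (real n)" for n
          using vm0[of n] by (simp add: min_def split: if_splits)
        have vle: "v n z \<le> r" for n unfolding vmin by simp
        have n0: "v (nat \<lceil>r\<rceil>) z = r"
        proof -
          have "r \<le> real (nat \<lceil>r\<rceil>)" by (rule real_nat_ceiling_ge)
          then show ?thesis unfolding vmin by simp
        qed
        have "(SUP n. ennreal (v n z)) = ennreal r"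
        proof (rule antisym)
          show "(SUP n. ennreal (v n z)) \<le> ennreal r" by (intro SUP_least ennreal_leI vle)
          show "ennreal r \<le> (SUP n. ennreal (v n z))"
            using SUP_upper[of "nat \<lceil>r\<rceil>" UNIV "\<lambda>n. ennreal (v n z)"] n0 by simp
        qed
        then show ?thesis using real by simp
      qed (use z in simp)
    qed
    also have "\<dots> = (SUP n. pos n)" unfolding pos_def
    proof (rule nn_integral_monotone_convergence_SUP_AE)
      show "AE z in P. ennreal (v n z) \<le> ennreal (v (Suc n) z)" for n
      proof (use AE in eventually_elim)
        fix z assume z: "u z \<noteq> - \<infinity> \<and> (\<forall>n. ereal (v n z) = min (u z) (ereal (real n)))"
        have "min (u z) (ereal (real n)) \<le> min (u z) (ereal (real (Suc n)))" by (intro min.mono) auto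
        then have "ereal (v n z) \<le> ereal (v (Suc n) z)" using z by simp
        then have "v n z \<le> v (Suc n) z" by simp
        then show "ennreal (v n z) \<le> ennreal (v (Suc n) z)" by (rule ennreal_leI)
      qed
      show "(\<lambda>z. ennreal (v n z)) \<in> borel_measurable P" for n using vm[of n] by measurable
    qed
    finally show ?thesis .
  qed
  have En: "eexpect P (\<lambda>z. ereal (v n z)) = enn2ereal (pos n) - enn2ereal (neg_int P u)" for n
  proof -
    have "neg_int P (\<lambda>z. ereal (v n z)) = neg_int P u" using negeq[of n] by (simp add: neg_int_def)
    moreover have "pos_int P (\<lambda>z. ereal (v n z)) = pos n" unfolding pos_int_def pos_def by simp
    ultimately show ?thesis unfolding eexpect_def by simp
  qed
  show ?thesis
  proof (cases "neg_int P u = \<infinity>")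
    case True
    then have "pos_int P u \<noteq> \<infinity>" using def unfolding expect_defined_def by auto
    then show ?thesis unfolding eexpect_def using True by (cases "pos_int P u") auto
  next
    case False
    then obtain c where c: "neg_int P u = ennreal c" "c \<ge> 0" by (cases "neg_int P u" rule: ennreal_cases) auto
    show ?thesis
    proof (cases D)
      case PInf then show ?thesis by simp
    next
      case MInf
      have "enn2ereal (pos 0) - ereal c \<le> - \<infinity>" using le[of 0] En[of 0] c MInf by simp
      moreover have "enn2ereal (pos 0) \<ge> 0" by simp
      ultimately show ?thesis by (cases "enn2ereal (pos 0)") auto
    next
      case (real d)
      have pn: "enn2ereal (pos n) \<le> ereal (d + c)" for n
      proof -
        have "enn2ereal (pos n) - ereal c \<le> ereal d" using le[of n] En[of n] c real by simp
        then show ?thesis by (cases "enn2ereal (pos n)") auto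
      qed
      have "0 \<le> ereal (d + c)" using order_trans[OF enn2ereal_nonneg pn[of 0]] .
      then have dc: "0 \<le> d + c" by simp
      have "pos n \<le> ennreal (d + c)" for n
      proof -
        have "e2ennreal (enn2ereal (pos n)) \<le> e2ennreal (ereal (d + c))" by (rule e2ennreal_mono[OF pn])
        then show ?thesis by simp
      qed
      then have "pos_int P u \<le> ennreal (d + c)" unfolding posE by (rule SUP_least)
      then have "enn2ereal (pos_int P u) \<le> enn2ereal (ennreal (d + c))" by (simp add: less_eq_ennreal.rep_eq)
      then have "enn2ereal (pos_int P u) \<le> ereal (d + c)" using dc by simp
      then show ?thesis unfolding eexpect_def c(1) using c(2) real by (cases "enn2ereal (pos_int P u)") auto
    qed
  qed
qed


context wd begin

lemma pos_from_gamma: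
  assumes gs: "sets g = sets (ref_measure (emp_measure Ph) nuX nuY)" and pg: "prob_space g"
    and re: "rel_entropy g (ref_measure (emp_measure Ph) nuX nuY) \<noteq> \<infinity>"
  shows "emeasure nuX UNIV \<noteq> 0 \<and> emeasure nuY UNIV \<noteq> 0"
proof (rule ccontr)
  assume a: "\<not> ?thesis"
  have ac: "absolutely_continuous (ref_measure (emp_measure Ph) nuX nuY) g"
    using re unfolding rel_entropy_def by (auto split: if_splits)
  have "emeasure (nuX \<Otimes>\<^sub>M nuY) (UNIV \<times> UNIV) = emeasure nuX UNIV * emeasure nuY UNIV"
    by (rule sigma_finite_measure.emeasure_pair_measure_Times[OF sf_Y]) (auto simp: setsX setsY)
  then have "emeasure (nuX \<Otimes>\<^sub>M nuY) UNIV = 0" using a by simp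
  moreover have u1: "UNIV \<in> sets (emp_measure Ph)" using sets.top[of "emp_measure Ph"] by simp
  moreover have u2: "UNIV \<in> sets (nuX \<Otimes>\<^sub>M nuY)" using sets.top[of "nuX \<Otimes>\<^sub>M nuY"] by (simp add: space_pair_measure)
  ultimately have "emeasure (ref_measure (emp_measure Ph) nuX nuY) (UNIV \<times> UNIV) = 0"
    unfolding ref_measure_def
    by (subst sigma_finite_measure.emeasure_pair_measure_Times[OF sf_XY]) auto
  moreover have "UNIV \<in> sets (ref_measure (emp_measure Ph) nuX nuY)"
    using sets.top[of "ref_measure (emp_measure Ph) nuX nuY"] sets_eq_imp_space_eq[OF sets_ref]
    by (simp add: space_pair_measure)
  ultimately have "UNIV \<in> null_sets (ref_measure (emp_measure Ph) nuX nuY)"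
    by (intro null_setsI) auto
  then have "UNIV \<in> null_sets g" using ac unfolding absolutely_continuous_def by blast
  then have e0: "emeasure g UNIV = 0" by (rule null_setsD1)
  have "space g = UNIV" using sets_eq_imp_space_eq[OF gs] sets_eq_imp_space_eq[OF sets_ref]
    by (simp add: space_pair_measure)
  then have "emeasure g UNIV = 1" using prob_space.emeasure_space_1[OF pg] by simp
  then show False using e0 by simp
qed

lemma main_step:
  fixes X :: "'a set" and Y :: "'b set" and Psi :: "'c \<times> 'b \<Rightarrow> ereal" and f :: "'a \<Rightarrow> 'c" and rho :: real
    and P :: "('a \<times> 'b) measure"
  assumes AX: "AE x in nuX. x \<in> X" and AY: "AE y in nuY. y \<in> Y"
    and le: "\<And>x y. x \<in> X \<Longrightarrow> y \<in> Y \<Longrightarrow> ereal (psi (x, y)) \<le> Psi (f x, y)"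
    and cs: "causal_sinkhorn_p p eps nuX nuY (emp_measure Ph) P \<le> ereal (rho powr p)"
  shows "eexpect P (\<lambda>z. ereal (psi z)) \<le> dual_obj p eps rho nuX nuY Psi f Ph lam"
proof -
  define Gam where "Gam = {g. sets g = sets (ref_measure (emp_measure Ph) nuX nuY) \<and> is_coupling g (emp_measure Ph) P \<and> is_causal g}"
  define V where "V g = enn2ereal (\<integral>\<^sup>+ w. ennreal (cost_p p (fst w) (snd w)) \<partial>g)
        + ereal eps * rel_entropy g (ref_measure (emp_measure Ph) nuX nuY)" for g
  have inf: "(INF g\<in>Gam. V g) \<le> ereal (rho powr p)" using cs unfolding causal_sinkhorn_p_def Gam_def V_def .
  then have "(INF g\<in>Gam. V g) < \<infinity>" by (rule le_less_trans) simp
  then obtain g0 where g0: "g0 \<in> Gam" "V g0 < \<infinity>" unfolding INF_less_iff by blast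
  have "rel_entropy g0 (ref_measure (emp_measure Ph) nuX nuY) \<noteq> \<infinity>"
  proof
    assume "rel_entropy g0 (ref_measure (emp_measure Ph) nuX nuY) = \<infinity>"
    then have "V g0 = \<infinity>" unfolding V_def using eps by simp
    then show False using g0 by simp
  qed
  moreover have "prob_space g0" using g0 unfolding Gam_def is_coupling_def by auto
  ultimately have nXY: "emeasure nuX UNIV \<noteq> 0 \<and> emeasure nuY UNIV \<noteq> 0"
    using g0 unfolding Gam_def by (intro pos_from_gamma) auto
  have step: "eexpect P (\<lambda>z. ereal (psi z)) \<le> ereal lam * ereal (rho powr p) + ereal (aa * (\<Sum>z\<in>set_pmf Ph. pmf Ph z * KM (real T) (fst z)))" for T :: nat
  proof (rule ereal_inf_aux[OF lam _ inf])
    fix g assume "g \<in> Gam"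
    then interpret wdg Ph nuX nuY p lam eps nb psi g P
      by unfold_locales (auto simp: Gam_def)
    show "eexpect P (\<lambda>z. ereal (psi z)) \<le> ereal lam * V g + ereal (aa * (\<Sum>z\<in>set_pmf Ph. pmf Ph z * KM (real T) (fst z)))"
      unfolding V_def by (rule core)
  qed
  have "eexpect P (\<lambda>z. ereal (psi z)) \<le> ereal (lam * rho powr p) + ereal (aa * (\<Sum>z\<in>set_pmf Ph. pmf Ph z * Kinf (fst z)))"
    by (rule bound_lim) (use step nXY in auto)
  also have "\<dots> \<le> dual_obj p eps rho nuX nuY Psi f Ph lam"
    by (rule dual_ge[OF AX AY le]) (use nXY in auto)
  finally show ?thesis .
qed

end


theorem lemma2:
  fixes X :: "'a::euclidean_space set" and Y :: "'b::euclidean_space set" and Z :: "'c::euclidean_space set"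
    and \<Psi> :: "'c \<times> 'b \<Rightarrow> ereal" and f :: "'a \<Rightarrow> 'c"
    and Ph :: "('a \<times> 'b) pmf"
    and p \<rho> \<epsilon> :: real
    and nuX :: "'a measure" and nuY :: "'b measure"
  assumes "compact X"
    and "X \<in> sets borel" and "Y \<in> sets borel" and "Z \<in> sets borel"
    and "f ` X \<subseteq> Z"
    and "\<forall>z\<in>Z. \<forall>y\<in>Y. \<Psi> (z, y) \<noteq> -\<infinity>"
    and "\<Psi> \<in> borel_measurable (restrict_space borel (Z \<times> Y))"
    and "f \<in> borel_measurable (restrict_space borel X)"
    and "finite (set_pmf Ph)" and "set_pmf Ph \<subseteq> X \<times> Y"
    and "p \<ge> 1" and "\<rho> \<ge> 0" and "\<epsilon> > 0"
    and "sets nuX = sets borel" and "sets nuY = sets borel"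
    and "AE x in nuX. x \<in> X" and "AE y in nuY. y \<in> Y"
    and "\<And>\<delta>. \<delta> > 0 \<Longrightarrow> (\<integral>\<^sup>+ u. ennreal (exp (- \<delta> * norm u powr p)) \<partial>nuX) < \<infinity>"
    and "\<And>\<delta>. \<delta> > 0 \<Longrightarrow> (\<integral>\<^sup>+ u. ennreal (exp (- \<delta> * norm u powr p)) \<partial>nuY) < \<infinity>"
  shows "primal_value p \<epsilon> \<rho> X Y nuX nuY \<Psi> f Ph \<le> dual_value p \<epsilon> \<rho> nuX nuY \<Psi> f Ph"
proof -
  note assms = assms
  have Xb[measurable]: "X \<in> sets borel" and Yb[measurable]: "Y \<in> sets borel" and Zb: "Z \<in> sets borel"
    using assms by auto
  show ?thesis unfolding primal_value_def dual_value_def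
  proof (intro SUP_least INF_greatest)
    fix P and lam :: real
    assume Pin: "P \<in> {P. prob_space P \<and> sets P = sets (borel :: ('a \<times> 'b) measure)
                 \<and> (AE z in P. z \<in> X \<times> Y)
                 \<and> expect_defined P (\<lambda>z. \<Psi> (f (fst z), snd z))
                 \<and> causal_sinkhorn_p p \<epsilon> nuX nuY (emp_measure Ph) P \<le> ereal (\<rho> powr p)}"
      and lamin: "lam \<in> {0<..}"
    have lam: "lam > 0" using lamin by simp
    have sP: "sets P = sets (borel :: ('a \<times> 'b) measure)" and AEP: "AE z in P. z \<in> X \<times> Y"
      and defP: "expect_defined P (\<lambda>z. \<Psi> (f (fst z), snd z))"
      and csP: "causal_sinkhorn_p p \<epsilon> nuX nuY (emp_measure Ph) P \<le> ereal (\<rho> powr p)"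
      using Pin by auto
    have finX: "emeasure nuX (space nuX) < \<infinity>"
    proof -
      obtain R where R: "\<And>x. x \<in> X \<Longrightarrow> norm x \<le> R" using compact_imp_bounded[OF assms(1)]
        unfolding bounded_iff by blast
      define R' where "R' = max R 0"
      have spX: "space nuX = UNIV" using sets_eq_imp_space_eq[OF assms(14)] by simp
      have "ennreal (exp (- 1 * R' powr p)) * emeasure nuX (space nuX) = (\<integral>\<^sup>+ u. ennreal (exp (- 1 * R' powr p)) \<partial>nuX)"
        by simp
      also have "\<dots> \<le> (\<integral>\<^sup>+ u. ennreal (exp (- 1 * norm u powr p)) \<partial>nuX)"
      proof (rule nn_integral_mono_AE, use assms(16) in eventually_elim)
        fix u assume "u \<in> X"
        then have "norm u \<le> R'" using R unfolding R'_def by fastforce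
        then have "norm u powr p \<le> R' powr p" using assms(11) by (intro powr_mono2) auto
        then show "ennreal (exp (- 1 * R' powr p)) \<le> ennreal (exp (- 1 * norm u powr p))"
          by (intro ennreal_leI) simp
      qed
      also have "\<dots> < \<infinity>" by (rule assms(18)) simp
      finally have "ennreal (exp (- 1 * R' powr p)) * emeasure nuX (space nuX) < \<infinity>" .
      then show ?thesis by (auto simp: ennreal_mult_less_top)
    qed
    define Psi' where "Psi' v = (if v \<in> Z \<times> Y then \<Psi> v else 0)" for v
    define f' where "f' x = (if x \<in> X then f x else 0)" for x
    define psi where "psi n v = (if fst v \<in> X \<and> snd v \<in> Y then real_of_ereal (min (Psi' (f' (fst v), snd v)) (ereal (real n))) else 0)"
      for n :: nat and v :: "'a \<times> 'b"
    have Psim: "Psi' \<in> borel_measurable (borel \<Otimes>\<^sub>M borel)"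
    proof -
      have ZY: "Z \<times> Y \<in> sets (borel :: ('c \<times> 'b) measure)" unfolding borel_prod[symmetric]
        using Zb Yb by (rule pair_measureI)
      have "(\<lambda>v. if v \<in> Z \<times> Y then \<Psi> v else 0) \<in> borel_measurable borel"
        using assms(7) ZY by (subst (asm) measurable_restrict_space_iff) auto
      then show ?thesis unfolding Psi'_def borel_prod .
    qed
    have fm: "f' \<in> borel_measurable borel"
      using assms(8) Xb unfolding f'_def by (subst (asm) measurable_restrict_space_iff) auto
    have psim: "psi n \<in> borel_measurable (borel \<Otimes>\<^sub>M borel)" for n
    proof -
      have [measurable]: "(\<lambda>v::'a\<times>'b. Psi' (f' (fst v), snd v)) \<in> borel_measurable (borel \<Otimes>\<^sub>M borel)"
      proof (rule measurable_compose[OF _ Psim])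
        show "(\<lambda>v::'a\<times>'b. (f' (fst v), snd v)) \<in> measurable (borel \<Otimes>\<^sub>M borel) (borel \<Otimes>\<^sub>M borel)"
          using fm by measurable
      qed
      show ?thesis unfolding psi_def by measurable
    qed
    have psile: "psi n v \<le> real n" for n v
    proof (cases "fst v \<in> X \<and> snd v \<in> Y")
      case True
      show ?thesis unfolding psi_def using True
        by (cases "Psi' (f' (fst v), snd v)") (auto simp: min_def)
    next
      case False
      then show ?thesis unfolding psi_def by auto
    qed
    have Psi_eq: "Psi' (f' x, y) = \<Psi> (f x, y)" if "x \<in> X" "y \<in> Y" for x y
      using that assms(5) unfolding Psi'_def f'_def by auto
    have notm: "\<Psi> (f x, y) \<noteq> - \<infinity>" if "x \<in> X" "y \<in> Y" for x y
      using that assms(5,6) by auto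
    have psi_eq: "ereal (psi n (x, y)) = min (\<Psi> (f x, y)) (ereal (real n))" if "x \<in> X" "y \<in> Y" for n x y
    proof -
      have "min (\<Psi> (f x, y)) (ereal (real n)) \<noteq> - \<infinity>" using notm[OF that] by (auto simp: min_def)
      moreover have "min (\<Psi> (f x, y)) (ereal (real n)) \<noteq> \<infinity>" by (auto simp: min_def)
      ultimately show ?thesis unfolding psi_def using that Psi_eq[OF that] by (auto intro: ereal_real')
    qed
    have wdn: "wd Ph nuX nuY p lam \<epsilon> (real n) (psi n)" for n
      by unfold_locales (use assms finX lam psim psile in auto)
    have le_n: "eexpect P (\<lambda>z. ereal (psi n z)) \<le> dual_obj p \<epsilon> \<rho> nuX nuY \<Psi> f Ph lam" for n
    proof (rule wd.main_step[OF wdn])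
      show "AE x in nuX. x \<in> X" by (rule assms(16))
      show "AE y in nuY. y \<in> Y" by (rule assms(17))
      show "ereal (psi n (x, y)) \<le> \<Psi> (f x, y)" if "x \<in> X" "y \<in> Y" for x y
        using psi_eq[OF that] by simp
      show "causal_sinkhorn_p p \<epsilon> nuX nuY (emp_measure Ph) P \<le> ereal (\<rho> powr p)" by (rule csP)
    qed
    show "eexpect P (\<lambda>z. \<Psi> (f (fst z), snd z)) \<le> dual_obj p \<epsilon> \<rho> nuX nuY \<Psi> f Ph lam"
    proof (rule trunc_expect[where v=psi])
      show "AE z in P. \<Psi> (f (fst z), snd z) \<noteq> - \<infinity> \<and> (\<forall>n. ereal (psi n z) = min (\<Psi> (f (fst z), snd z)) (ereal (real n)))"
        using AEP by eventually_elim (auto simp: notm psi_eq)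
      show "psi n \<in> borel_measurable P" for n
        using psim[of n] by (simp add: measurable_cong_sets[OF sP refl] borel_prod)
      show "expect_defined P (\<lambda>z. \<Psi> (f (fst z), snd z))" by (rule defP)
      show "eexpect P (\<lambda>z. ereal (psi n z)) \<le> dual_obj p \<epsilon> \<rho> nuX nuY \<Psi> f Ph lam" for n by (rule le_n)
    qed
  qed
qed


end
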